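(* Let $(\Omega,\Sigma,\mathbb{P})$ be a probability space and let $X$ be a Banach function space in $L_0(\Sigma)$. Then for every $\sigma(X,X_n^\sim)$-closed cone $C$ in $X$ such that $C\supset -X_+$ and $C\cap X_+=\{0\}$, there exists a strictly positive functional $\phi\in X_n^\sim$ such that $\phi(x)\le 0$ for all $x\in C$.
   Context: $L_0(\Sigma)$ is the vector lattice of real-valued measurable functions modulo a.e. equality with the a.e. order. A Banach function space is an ideal $X$ of $L_0(\Sigma)$ (i.e. $|x|\le|y|$, $y\in X$ imply $x\in X$) endowed with a complete lattice norm. $X_+=\{x\in X:x\ge0\}$. A linear functional on $X$ is order continuous if $\phi(x_\alpha)\to0$ whenever $x_\alpha\to0$ in order (i.e. there is a net $z_\beta\downarrow0$ in $X$ such that for every $\beta$ eventually $|x_\alpha|\le z_\beta$); $X_n^\sim$ is the space of order continuous linear functionals on $X$, and $\sigma(X,X_n^\sim)$ is the weak topology on $X$ induced by $X_n^\sim$. A functional $\phi$ is strictly positive if $\phi(x)>0$ for all $x\ge0$, $x\ne0$. *)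

theory Defs
  imports "HOL-Analysis.Analysis" "HOL-Probability.Probability"
begin

text \<open>Elements of L_0(Sigma) are represented by measurable functions; everything
is formulated so that it respects a.e. equality (setoid representation of the quotient).\<close>

definition ae_le :: "'a measure \<Rightarrow> ('a \<Rightarrow> real) \<Rightarrow> ('a \<Rightarrow> real) \<Rightarrow> bool" where
  "ae_le M f g \<longleftrightarrow> (AE x in M. f x \<le> g x)"

definition banach_function_space ::
  "'a measure \<Rightarrow> ('a \<Rightarrow> real) set \<Rightarrow> (('a \<Rightarrow> real) \<Rightarrow> real) \<Rightarrow> bool" where
  "banach_function_space M X N \<longleftrightarrow>
     X \<subseteq> borel_measurable M \<and>
     (\<lambda>x. 0) \<in> X \<and>
     (\<forall>f\<in>X. \<forall>g\<in>X. (\<lambda>x. f x + g x) \<in> X) \<and>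
     (\<forall>f\<in>X. \<forall>c::real. (\<lambda>x. c * f x) \<in> X) \<and>
     (\<forall>f\<in>X. \<forall>g\<in>borel_measurable M. (AE x in M. \<bar>g x\<bar> \<le> \<bar>f x\<bar>) \<longrightarrow> g \<in> X) \<and>
     (\<forall>f\<in>X. N f \<ge> 0) \<and>
     (\<forall>f\<in>X. N f = 0 \<longleftrightarrow> (AE x in M. f x = 0)) \<and>
     (\<forall>f\<in>X. \<forall>c::real. N (\<lambda>x. c * f x) = \<bar>c\<bar> * N f) \<and>
     (\<forall>f\<in>X. \<forall>g\<in>X. N ((\<lambda>x. f x + g x)) \<le> N f + N g) \<and>
     (\<forall>f\<in>X. \<forall>g\<in>X. (AE x in M. \<bar>f x\<bar> \<le> \<bar>g x\<bar>) \<longrightarrow> N f \<le> N g) \<and>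
     (\<forall>u::nat \<Rightarrow> ('a \<Rightarrow> real). (\<forall>n. u n \<in> X) \<and>
         (\<forall>e>0. \<exists>K. \<forall>m\<ge>K. \<forall>n\<ge>K. N ((\<lambda>x. u m x - u n x)) < e) \<longrightarrow>
         (\<exists>f\<in>X. (\<lambda>n. N ((\<lambda>x. u n x - f x))) \<longlonglongrightarrow> 0))"

definition directed_set :: "'i set \<Rightarrow> ('i \<Rightarrow> 'i \<Rightarrow> bool) \<Rightarrow> bool" where
  "directed_set I r \<longleftrightarrow> I \<noteq> {} \<and> (\<forall>a\<in>I. r a a) \<and>
     (\<forall>a\<in>I. \<forall>b\<in>I. \<forall>c\<in>I. r a b \<and> r b c \<longrightarrow> r a c) \<and>
     (\<forall>a\<in>I. \<forall>b\<in>I. \<exists>c\<in>I. r a c \<and> r b c)"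

definition net_eventually :: "'i set \<Rightarrow> ('i \<Rightarrow> 'i \<Rightarrow> bool) \<Rightarrow> ('i \<Rightarrow> bool) \<Rightarrow> bool" where
  "net_eventually I r P \<longleftrightarrow> (\<exists>a0\<in>I. \<forall>a\<in>I. r a0 a \<longrightarrow> P a)"

definition net_tendsto :: "'i set \<Rightarrow> ('i \<Rightarrow> 'i \<Rightarrow> bool) \<Rightarrow> ('i \<Rightarrow> real) \<Rightarrow> real \<Rightarrow> bool" where
  "net_tendsto I r y L \<longleftrightarrow> (\<forall>e>0. net_eventually I r (\<lambda>a. \<bar>y a - L\<bar> < e))"

definition decreasing_to_zero ::
  "'a measure \<Rightarrow> ('a \<Rightarrow> real) set \<Rightarrow> 'j set \<Rightarrow> ('j \<Rightarrow> 'j \<Rightarrow> bool) \<Rightarrow> ('j \<Rightarrow> ('a \<Rightarrow> real)) \<Rightarrow> bool" where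
  "decreasing_to_zero M X J s z \<longleftrightarrow> directed_set J s \<and>
     (\<forall>b\<in>J. z b \<in> X) \<and>
     (\<forall>b\<in>J. \<forall>b'\<in>J. s b b' \<longrightarrow> ae_le M (z b') (z b)) \<and>
     (\<forall>b\<in>J. ae_le M (\<lambda>x. 0) (z b)) \<and>
     (\<forall>w\<in>X. (\<forall>b\<in>J. ae_le M w (z b)) \<longrightarrow> ae_le M w (\<lambda>x. 0))"

text \<open>Order convergence to 0 of a net x in X. The dominating net is indexed by
  subsets of the function type (no loss of generality: a decreasing net may be
  reindexed by its own set of values).\<close>
definition order_null ::
  "'a measure \<Rightarrow> ('a \<Rightarrow> real) set \<Rightarrow> 'i set \<Rightarrow> ('i \<Rightarrow> 'i \<Rightarrow> bool) \<Rightarrow> ('i \<Rightarrow> ('a \<Rightarrow> real)) \<Rightarrow> bool" where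
  "order_null M X I r x \<longleftrightarrow> (\<forall>a\<in>I. x a \<in> X) \<and>
     (\<exists>(J :: ('a \<Rightarrow> real) set) s (z :: ('a \<Rightarrow> real) \<Rightarrow> ('a \<Rightarrow> real)).
        decreasing_to_zero M X J s z \<and>
        (\<forall>b\<in>J. net_eventually I r (\<lambda>a. ae_le M (\<lambda>\<omega>. \<bar>x a \<omega>\<bar>) (z b))))"

definition linear_functional_on :: "'a measure \<Rightarrow> ('a \<Rightarrow> real) set \<Rightarrow> (('a \<Rightarrow> real) \<Rightarrow> real) \<Rightarrow> bool" where
  "linear_functional_on M X \<phi> \<longleftrightarrow>
     (\<forall>f\<in>X. \<forall>g\<in>X. \<phi> ((\<lambda>x. f x + g x)) = \<phi> f + \<phi> g) \<and>
     (\<forall>f\<in>X. \<forall>c::real. \<phi> (\<lambda>x. c * f x) = c * \<phi> f) \<and>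
     (\<forall>f\<in>X. \<forall>g\<in>X. (AE x in M. f x = g x) \<longrightarrow> \<phi> f = \<phi> g)"

text \<open>Order continuity, tested on nets indexed by subsets of the function type
  (equivalent to arbitrary index sets, by reindexing along the dominating net).\<close>
definition order_continuous :: "'a measure \<Rightarrow> ('a \<Rightarrow> real) set \<Rightarrow> (('a \<Rightarrow> real) \<Rightarrow> real) \<Rightarrow> bool" where
  "order_continuous M X \<phi> \<longleftrightarrow>
     (\<forall>(I :: ('a \<Rightarrow> real) set) r (x :: ('a \<Rightarrow> real) \<Rightarrow> ('a \<Rightarrow> real)).
        directed_set I r \<and> order_null M X I r x \<longrightarrow> net_tendsto I r (\<lambda>a. \<phi> (x a)) 0)"

definition order_cont_dual :: "'a measure \<Rightarrow> ('a \<Rightarrow> real) set \<Rightarrow> (('a \<Rightarrow> real) \<Rightarrow> real) set" where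
  "order_cont_dual M X = {\<phi>. linear_functional_on M X \<phi> \<and> order_continuous M X \<phi>}"

definition weak_topology :: "'a measure \<Rightarrow> ('a \<Rightarrow> real) set \<Rightarrow> ('a \<Rightarrow> real) topology" where
  "weak_topology M X = topology_generated_by
     {{f \<in> X. \<phi> f \<in> U} | \<phi> U. \<phi> \<in> order_cont_dual M X \<and> open U}"

definition strictly_positive :: "'a measure \<Rightarrow> ('a \<Rightarrow> real) set \<Rightarrow> (('a \<Rightarrow> real) \<Rightarrow> real) \<Rightarrow> bool" where
  "strictly_positive M X \<phi> \<longleftrightarrow>
     (\<forall>f\<in>X. ae_le M (\<lambda>x. 0) f \<and> \<not> (AE x in M. f x = 0) \<longrightarrow> \<phi> f > 0)"

end

theory Submission
  imports Defs
begin


locale bfs =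
  fixes M :: "'a measure" and X :: "('a \<Rightarrow> real) set" and N :: "('a \<Rightarrow> real) \<Rightarrow> real"
  assumes bfs: "banach_function_space M X N"
begin

lemma meas: "f \<in> X \<Longrightarrow> f \<in> borel_measurable M"
  using bfs unfolding banach_function_space_def by blast
lemma zero: "(\<lambda>x. 0) \<in> X"
  using bfs unfolding banach_function_space_def by blast
lemma add: "f \<in> X \<Longrightarrow> g \<in> X \<Longrightarrow> (\<lambda>x. f x + g x) \<in> X"
  using bfs unfolding banach_function_space_def by blast
lemma smult: "f \<in> X \<Longrightarrow> (\<lambda>x. c * f x) \<in> X"
  using bfs unfolding banach_function_space_def by blast
lemma solid: "f \<in> X \<Longrightarrow> g \<in> borel_measurable M \<Longrightarrow> (AE x in M. \<bar>g x\<bar> \<le> \<bar>f x\<bar>) \<Longrightarrow> g \<in> X"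
  using bfs unfolding banach_function_space_def by blast
lemma N_nonneg: "f \<in> X \<Longrightarrow> N f \<ge> 0"
  using bfs unfolding banach_function_space_def by blast
lemma N_zero: "f \<in> X \<Longrightarrow> N f = 0 \<longleftrightarrow> (AE x in M. f x = 0)"
  using bfs unfolding banach_function_space_def by blast
lemma N_smult: "f \<in> X \<Longrightarrow> N (\<lambda>x. c * f x) = \<bar>c\<bar> * N f"
  using bfs unfolding banach_function_space_def by blast
lemma N_tri: "f \<in> X \<Longrightarrow> g \<in> X \<Longrightarrow> N (\<lambda>x. f x + g x) \<le> N f + N g"
  using bfs unfolding banach_function_space_def by blast
lemma N_mono: "f \<in> X \<Longrightarrow> g \<in> X \<Longrightarrow> (AE x in M. \<bar>f x\<bar> \<le> \<bar>g x\<bar>) \<Longrightarrow> N f \<le> N g"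
  using bfs unfolding banach_function_space_def by blast
lemma complete: "(\<forall>n. u n \<in> X) \<Longrightarrow>
         (\<forall>e>0. \<exists>K. \<forall>m\<ge>K. \<forall>n\<ge>K. N ((\<lambda>x. u m x - u n x)) < e) \<Longrightarrow>
         (\<exists>f\<in>X. (\<lambda>n. N ((\<lambda>x. u n x - f x))) \<longlonglongrightarrow> 0)"
  using bfs unfolding banach_function_space_def by blast

lemma diff: "f \<in> X \<Longrightarrow> g \<in> X \<Longrightarrow> (\<lambda>x. f x - g x) \<in> X"
  using add[of f "\<lambda>x. (-1) * g x"] smult[of g "-1"] by simp
lemma absX: assumes "f \<in> X" shows "(\<lambda>x. \<bar>f x\<bar>) \<in> X"
proof -
  have "f \<in> borel_measurable M" by (rule meas[OF assms])
  then have "(\<lambda>x. \<bar>f x\<bar>) \<in> borel_measurable M" by measurable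
  then show ?thesis by (rule solid[OF assms]) auto
qed
lemma minX: "f \<in> X \<Longrightarrow> g \<in> borel_measurable M \<Longrightarrow> (AE x in M. 0 \<le> g x \<and> g x \<le> \<bar>f x\<bar>) \<Longrightarrow> g \<in> X"
  by (rule solid[of f]) (auto elim!: AE_mp)
lemma N_abs: "f \<in> X \<Longrightarrow> N (\<lambda>x. \<bar>f x\<bar>) = N f"
  using N_mono[of f "\<lambda>x. \<bar>f x\<bar>"] N_mono[of "\<lambda>x. \<bar>f x\<bar>" f] absX[of f] by force

end

lemma lf_add: "linear_functional_on M X \<phi> \<Longrightarrow> f \<in> X \<Longrightarrow> g \<in> X \<Longrightarrow> \<phi> (\<lambda>x. f x + g x) = \<phi> f + \<phi> g"
  unfolding linear_functional_on_def by blast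
lemma lf_smult: "linear_functional_on M X \<phi> \<Longrightarrow> f \<in> X \<Longrightarrow> \<phi> (\<lambda>x. c * f x) = c * \<phi> f"
  unfolding linear_functional_on_def by blast
lemma lf_ae: "linear_functional_on M X \<phi> \<Longrightarrow> f \<in> X \<Longrightarrow> g \<in> X \<Longrightarrow> (AE x in M. f x = g x) \<Longrightarrow> \<phi> f = \<phi> g"
  unfolding linear_functional_on_def by blast

context bfs begin

lemma lf_zero: assumes "linear_functional_on M X \<phi>" shows "\<phi> (\<lambda>x. 0) = 0"
  using lf_smult[OF assms zero, of 0] by simp

lemma lf_diff: assumes "linear_functional_on M X \<phi>" "f \<in> X" "g \<in> X"
  shows "\<phi> (\<lambda>x. f x - g x) = \<phi> f - \<phi> g"
  using lf_add[OF assms(1,2) smult[OF assms(3), of "-1"]] lf_smult[OF assms(1,3), of "-1"] by simp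

lemma lf_null: assumes "linear_functional_on M X \<phi>" "f \<in> X" "AE x in M. f x = 0"
  shows "\<phi> f = 0"
  using lf_ae[OF assms(1,2) zero] assms lf_zero[OF assms(1)] by simp

lemma lf_sum: assumes "linear_functional_on M X \<phi>" "finite S" "\<And>i. i \<in> S \<Longrightarrow> u i \<in> X"
  shows "(\<lambda>x. \<Sum>i\<in>S. u i x) \<in> X \<and> \<phi> (\<lambda>x. \<Sum>i\<in>S. u i x) = (\<Sum>i\<in>S. \<phi> (u i))"
  using assms(2,3)
proof (induction S rule: finite_induct)
  case empty then show ?case using zero lf_zero[OF assms(1)] by simp
next
  case (insert a F)
  then show ?case using add[of "u a" "\<lambda>x. \<Sum>i\<in>F. u i x"] lf_add[OF assms(1), of "u a" "\<lambda>x. \<Sum>i\<in>F. u i x"]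
    by simp
qed

definition pos :: "(('a \<Rightarrow> real) \<Rightarrow> real) \<Rightarrow> bool" where
  "pos \<phi> \<longleftrightarrow> (\<forall>g\<in>X. (AE x in M. 0 \<le> g x) \<longrightarrow> 0 \<le> \<phi> g)"

lemma pos_mono: assumes "linear_functional_on M X \<phi>" "pos \<phi>" "f \<in> X" "g \<in> X" "AE x in M. f x \<le> g x"
  shows "\<phi> f \<le> \<phi> g"
proof -
  have "0 \<le> \<phi> (\<lambda>x. g x - f x)" using assms diff[of g f] unfolding pos_def by (auto elim!: AE_mp)
  then show ?thesis using lf_diff[OF assms(1,4,3)] by simp
qed

lemma pos_abs: assumes "linear_functional_on M X \<phi>" "pos \<phi>" "f \<in> X"
  shows "\<bar>\<phi> f\<bar> \<le> \<phi> (\<lambda>x. \<bar>f x\<bar>)"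
proof -
  have "\<phi> f \<le> \<phi> (\<lambda>x. \<bar>f x\<bar>)" by (rule pos_mono[OF assms(1,2,3) absX[OF assms(3)]]) auto
  moreover have "\<phi> (\<lambda>x. -1 * f x) \<le> \<phi> (\<lambda>x. \<bar>f x\<bar>)"
    by (rule pos_mono[OF assms(1,2) smult[OF assms(3)] absX[OF assms(3)]]) auto
  ultimately show ?thesis using lf_smult[OF assms(1,3), of "-1"] by simp
qed

end



lemma net_ev_mono: "net_eventually I r P \<Longrightarrow> (\<And>a. a \<in> I \<Longrightarrow> P a \<Longrightarrow> Q a) \<Longrightarrow> net_eventually I r Q"
  unfolding net_eventually_def by blast

lemma net_ev_conj: assumes "directed_set I r" "net_eventually I r P" "net_eventually I r Q"
  shows "net_eventually I r (\<lambda>a. P a \<and> Q a)"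
proof -
  obtain a1 where a1: "a1 \<in> I" "\<forall>a\<in>I. r a1 a \<longrightarrow> P a" using assms(2) unfolding net_eventually_def by blast
  obtain a2 where a2: "a2 \<in> I" "\<forall>a\<in>I. r a2 a \<longrightarrow> Q a" using assms(3) unfolding net_eventually_def by blast
  obtain c where c: "c \<in> I" "r a1 c" "r a2 c" using assms(1) a1(1) a2(1) unfolding directed_set_def by blast
  have "\<forall>a\<in>I. r c a \<longrightarrow> P a \<and> Q a"
  proof (intro ballI impI)
    fix a assume "a \<in> I" "r c a"
    then have "r a1 a" "r a2 a" using assms(1) c a1(1) a2(1) unfolding directed_set_def by blast+
    then show "P a \<and> Q a" using a1 a2 \<open>a \<in> I\<close> by blast
  qed
  then show ?thesis using c(1) unfolding net_eventually_def by blast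
qed

lemma net_ev_true: "directed_set I r \<Longrightarrow> (\<And>a. a \<in> I \<Longrightarrow> P a) \<Longrightarrow> net_eventually I r P"
  unfolding net_eventually_def directed_set_def by blast

lemma net_tendsto_add: assumes "directed_set I r" "net_tendsto I r f 0" "net_tendsto I r g 0"
  shows "net_tendsto I r (\<lambda>a. f a + g a) 0"
  unfolding net_tendsto_def
proof (intro allI impI)
  fix e :: real assume e: "e > 0"
  have h1: "net_eventually I r (\<lambda>a. \<bar>f a - 0\<bar> < e/2)" using assms(2) e unfolding net_tendsto_def by (meson half_gt_zero)
  have h2: "net_eventually I r (\<lambda>a. \<bar>g a - 0\<bar> < e/2)" using assms(3) e unfolding net_tendsto_def by (meson half_gt_zero)
  have "net_eventually I r (\<lambda>a. \<bar>f a - 0\<bar> < e/2 \<and> \<bar>g a - 0\<bar> < e/2)"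
    by (rule net_ev_conj[OF assms(1) h1 h2])
  then show "net_eventually I r (\<lambda>a. \<bar>f a + g a - 0\<bar> < e)"
    by (rule net_ev_mono) auto
qed

lemma net_tendsto_cmult: assumes "directed_set I r" "net_tendsto I r f 0"
  shows "net_tendsto I r (\<lambda>a. c * f a) 0"
  unfolding net_tendsto_def
proof (intro allI impI)
  fix e :: real assume e: "e > 0"
  have "net_eventually I r (\<lambda>a. \<bar>f a - 0\<bar> < e / (\<bar>c\<bar> + 1))"
    using assms e unfolding net_tendsto_def by auto
  then show "net_eventually I r (\<lambda>a. \<bar>c * f a - 0\<bar> < e)"
  proof (rule net_ev_mono)
    fix a assume "\<bar>f a - 0\<bar> < e / (\<bar>c\<bar> + 1)"
    then have "\<bar>f a\<bar> * (\<bar>c\<bar> + 1) < e" by (simp add: field_simps)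
    moreover have "\<bar>c * f a\<bar> \<le> \<bar>f a\<bar> * (\<bar>c\<bar> + 1)" by (simp add: abs_mult algebra_simps)
    ultimately show "\<bar>c * f a - 0\<bar> < e" by simp
  qed
qed

lemma net_tendsto_zero: "directed_set I r \<Longrightarrow> net_tendsto I r (\<lambda>a. 0) 0"
  unfolding net_tendsto_def by (auto intro: net_ev_true)

lemma net_tendsto_sum: assumes "directed_set I r" "finite S" "\<And>i. i \<in> S \<Longrightarrow> net_tendsto I r (f i) 0"
  shows "net_tendsto I r (\<lambda>a. \<Sum>i\<in>S. f i a) 0"
  using assms(2,3)
proof (induction S rule: finite_induct)
  case empty then show ?case using net_tendsto_zero[OF assms(1)] by simp
next
  case (insert x F)
  then show ?case using net_tendsto_add[OF assms(1), of "f x" "\<lambda>a. \<Sum>i\<in>F. f i a"] by simp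
qed

lemma oc_intro: "(\<And>(I :: ('a \<Rightarrow> real) set) r (x :: ('a \<Rightarrow> real) \<Rightarrow> ('a \<Rightarrow> real)).
        directed_set I r \<Longrightarrow> order_null M X I r x \<Longrightarrow> net_tendsto I r (\<lambda>a. \<phi> (x a)) 0) \<Longrightarrow> order_continuous M X \<phi>"
  unfolding order_continuous_def by blast

lemma oc_D: "order_continuous (M :: 'a measure) X \<phi> \<Longrightarrow> directed_set (I :: ('a \<Rightarrow> real) set) r \<Longrightarrow> order_null M X I r x \<Longrightarrow> net_tendsto I r (\<lambda>a. \<phi> (x a)) 0"
  unfolding order_continuous_def by blast

context bfs begin

lemma dual_zero: "(\<lambda>g. 0) \<in> order_cont_dual M X"
proof -
  have "order_continuous M X (\<lambda>g. 0)" by (rule oc_intro) (rule net_tendsto_zero)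
  moreover have "linear_functional_on M X (\<lambda>g. 0)" unfolding linear_functional_on_def by simp
  ultimately show ?thesis unfolding order_cont_dual_def by blast
qed

lemma dual_lf: "\<phi> \<in> order_cont_dual M X \<Longrightarrow> linear_functional_on M X \<phi>"
  unfolding order_cont_dual_def by blast
lemma dual_oc: "\<phi> \<in> order_cont_dual M X \<Longrightarrow> order_continuous M X \<phi>"
  unfolding order_cont_dual_def by blast

lemma dual_add: assumes "\<phi> \<in> order_cont_dual M X" "\<psi> \<in> order_cont_dual M X"
  shows "(\<lambda>g. \<phi> g + \<psi> g) \<in> order_cont_dual M X"
proof -
  have l1: "linear_functional_on M X \<phi>" and l2: "linear_functional_on M X \<psi>" using assms dual_lf by auto
  have "linear_functional_on M X (\<lambda>g. \<phi> g + \<psi> g)"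
    unfolding linear_functional_on_def
  proof (intro conjI ballI allI impI)
    fix f g assume "f \<in> X" "g \<in> X"
    then show "\<phi> (\<lambda>x. f x + g x) + \<psi> (\<lambda>x. f x + g x) = \<phi> f + \<psi> f + (\<phi> g + \<psi> g)"
      using lf_add[OF l1] lf_add[OF l2] by simp
  next
    fix f c assume "f \<in> X"
    then show "\<phi> (\<lambda>x. c * f x) + \<psi> (\<lambda>x. c * f x) = c * (\<phi> f + \<psi> f)"
      using lf_smult[OF l1] lf_smult[OF l2] by (simp add: distrib_left)
  next
    fix f g assume "f \<in> X" "g \<in> X" "AE x in M. f x = g x"
    then have "\<phi> f = \<phi> g" "\<psi> f = \<psi> g" using lf_ae[OF l1, of f g] lf_ae[OF l2, of f g] by blast+
    then show "\<phi> f + \<psi> f = \<phi> g + \<psi> g" by simp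
  qed
  moreover have "order_continuous M X (\<lambda>g. \<phi> g + \<psi> g)"
  proof (rule oc_intro)
    fix I :: "('a \<Rightarrow> real) set" and r x assume h: "directed_set I r" "order_null M X I r x"
    show "net_tendsto I r (\<lambda>a. \<phi> (x a) + \<psi> (x a)) 0"
      by (rule net_tendsto_add[OF h(1) oc_D[OF dual_oc[OF assms(1)] h] oc_D[OF dual_oc[OF assms(2)] h]])
  qed
  ultimately show ?thesis unfolding order_cont_dual_def by blast
qed

lemma dual_smult: assumes "\<phi> \<in> order_cont_dual M X"
  shows "(\<lambda>g. c * \<phi> g) \<in> order_cont_dual M X"
proof -
  have l1: "linear_functional_on M X \<phi>" using assms dual_lf by auto
  have "linear_functional_on M X (\<lambda>g. c * \<phi> g)"
    unfolding linear_functional_on_def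
  proof (intro conjI ballI allI impI)
    fix f g assume "f \<in> X" "g \<in> X"
    then show "c * \<phi> (\<lambda>x. f x + g x) = c * \<phi> f + c * \<phi> g"
      using lf_add[OF l1] by (simp add: distrib_left)
  next
    fix f d assume "f \<in> X"
    then show "c * \<phi> (\<lambda>x. d * f x) = d * (c * \<phi> f)"
      using lf_smult[OF l1] by simp
  next
    fix f g assume "f \<in> X" "g \<in> X" "AE x in M. f x = g x"
    then have "\<phi> f = \<phi> g" using lf_ae[OF l1, of f g] by blast
    then show "c * \<phi> f = c * \<phi> g" by simp
  qed
  moreover have "order_continuous M X (\<lambda>g. c * \<phi> g)"
  proof (rule oc_intro)
    fix I :: "('a \<Rightarrow> real) set" and r x assume h: "directed_set I r" "order_null M X I r x"
    show "net_tendsto I r (\<lambda>a. c * \<phi> (x a)) 0"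
      by (rule net_tendsto_cmult[OF h(1) oc_D[OF dual_oc[OF assms(1)] h]])
  qed
  ultimately show ?thesis unfolding order_cont_dual_def by blast
qed

lemma dual_lincomb: assumes "finite S" "\<And>i. i \<in> S \<Longrightarrow> \<phi> i \<in> order_cont_dual M X"
  shows "(\<lambda>g. \<Sum>i\<in>S. c i * \<phi> i g) \<in> order_cont_dual M X"
  using assms
proof (induction S rule: finite_induct)
  case empty then show ?case using dual_zero by simp
next
  case (insert x F)
  have a: "(\<lambda>g. c x * \<phi> x g) \<in> order_cont_dual M X" by (rule dual_smult) (use insert in auto)
  have b: "(\<lambda>g. \<Sum>i\<in>F. c i * \<phi> i g) \<in> order_cont_dual M X" by (rule insert.IH) (use insert in auto)
  have eq: "(\<lambda>g. \<Sum>i\<in>insert x F. c i * \<phi> i g) = (\<lambda>g. c x * \<phi> x g + (\<Sum>i\<in>F. c i * \<phi> i g))"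
    by (rule ext) (rule sum.insert[OF insert.hyps])
  show ?case unfolding eq by (rule dual_add[OF a b])
qed

lemma seq_oc:
  assumes oc: "order_continuous M X \<phi>"
    and x: "\<And>n. x n \<in> X" and z: "\<And>n. z n \<in> X"
    and dom: "\<And>n. AE \<omega> in M. \<bar>x n \<omega>\<bar> \<le> z n \<omega>"
    and dec: "AE \<omega> in M. \<forall>m n. m \<le> n \<longrightarrow> z n \<omega> \<le> z m \<omega>"
    and nn: "\<And>n. AE \<omega> in M. 0 \<le> z n \<omega>"
    and ev0: "AE \<omega> in M. \<exists>n. z n \<omega> = 0"
  shows "(\<lambda>n. \<phi> (x n)) \<longlonglongrightarrow> 0"
proof -
  define I where "I = range (\<lambda>n::nat. \<lambda>_::'a. real n)"
  define r where "r = (\<lambda>(a::'a\<Rightarrow>real) (b::'a\<Rightarrow>real). a undefined \<le> b undefined)"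
  define idx where "idx = (\<lambda>a::'a\<Rightarrow>real. nat \<lfloor>a undefined\<rfloor>)"
  have idx: "idx (\<lambda>_. real n) = n" for n by (simp add: idx_def)
  have dir: "directed_set I r" unfolding directed_set_def I_def r_def
  proof (intro conjI ballI)
    fix a b assume "a \<in> range (\<lambda>n::nat. \<lambda>_::'a. real n)" "b \<in> range (\<lambda>n::nat. \<lambda>_::'a. real n)"
    then obtain i j where "a = (\<lambda>_. real i)" "b = (\<lambda>_. real j)" by auto
    then show "\<exists>c\<in>range (\<lambda>n::nat. \<lambda>_::'a. real n). a undefined \<le> c undefined \<and> b undefined \<le> c undefined"
      by (intro bexI[of _ "\<lambda>_. real (max i j)"]) auto
  qed auto
  define xx where "xx = (\<lambda>a. x (idx a))"
  define zz where "zz = (\<lambda>a. z (idx a))"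
  have decr: "AE \<omega> in M. z n \<omega> \<le> z m \<omega>" if "m \<le> n" for m n
    using dec that by (auto elim!: AE_mp)
  have dz: "decreasing_to_zero M X I r zz"
    unfolding decreasing_to_zero_def
  proof (intro conjI ballI impI)
    show "directed_set I r" by (rule dir)
  next
    fix b assume "b \<in> I" then show "zz b \<in> X" using z by (simp add: zz_def)
  next
    fix b b' assume "b \<in> I" "b' \<in> I" "r b b'"
    then obtain i j where ij: "b = (\<lambda>_. real i)" "b' = (\<lambda>_. real j)" "i \<le> j"
      unfolding I_def r_def by auto
    then show "ae_le M (zz b') (zz b)" unfolding ae_le_def zz_def using decr[OF ij(3)] by (simp add: idx)
  next
    fix b assume "b \<in> I" then show "ae_le M (\<lambda>x. 0) (zz b)" unfolding ae_le_def zz_def using nn by simp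
  next
    fix w assume "w \<in> X" "\<forall>b\<in>I. ae_le M w (zz b)"
    then have "AE \<omega> in M. w \<omega> \<le> z n \<omega>" for n
      using idx[of n] unfolding I_def ae_le_def zz_def by (metis rangeI)
    then have "AE \<omega> in M. \<forall>n. w \<omega> \<le> z n \<omega>" by (simp add: AE_all_countable)
    then show "ae_le M w (\<lambda>x. 0)" unfolding ae_le_def using ev0
      by eventually_elim (metis)
  qed
  have on: "order_null M X I r xx"
    unfolding order_null_def
  proof (intro conjI ballI exI[of _ I] exI[of _ r] exI[of _ zz])
    fix a assume "a \<in> I" then show "xx a \<in> X" using x by (simp add: xx_def)
  next
    show "decreasing_to_zero M X I r zz" by (rule dz)
  next
    fix b assume b: "b \<in> I"
    show "net_eventually I r (\<lambda>a. ae_le M (\<lambda>\<omega>. \<bar>xx a \<omega>\<bar>) (zz b))"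
      unfolding net_eventually_def
    proof (intro bexI[OF _ b] ballI impI)
      fix a assume "a \<in> I" "r b a"
      then obtain i j where ij: "b = (\<lambda>_. real i)" "a = (\<lambda>_. real j)" "i \<le> j"
        using b unfolding I_def r_def by auto
      have "AE \<omega> in M. \<bar>x j \<omega>\<bar> \<le> z i \<omega>" using decr[OF ij(3)] dom[of j]
        by eventually_elim linarith
      then show "ae_le M (\<lambda>\<omega>. \<bar>xx a \<omega>\<bar>) (zz b)"
        unfolding ae_le_def xx_def zz_def ij idx .
    qed
  qed
  have nt: "net_tendsto I r (\<lambda>a. \<phi> (xx a)) 0" by (rule oc_D[OF oc dir on])
  show ?thesis
  proof (rule LIMSEQ_I)
    fix e :: real assume "0 < e"
    then obtain a0 where a0: "a0 \<in> I" "\<forall>a\<in>I. r a0 a \<longrightarrow> \<bar>\<phi> (xx a) - 0\<bar> < e"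
      using nt unfolding net_tendsto_def net_eventually_def by blast
    then obtain k where k: "a0 = (\<lambda>_. real k)" unfolding I_def by auto
    have "\<forall>n\<ge>k. norm (\<phi> (x n) - 0) < e"
    proof (intro allI impI)
      fix n assume "k \<le> n"
      then have "r a0 (\<lambda>_. real n)" unfolding r_def k by simp
      moreover have "(\<lambda>_. real n) \<in> I" unfolding I_def by auto
      ultimately have "\<bar>\<phi> (xx (\<lambda>_. real n)) - 0\<bar> < e" using a0(2) by blast
      then show "norm (\<phi> (x n) - 0) < e" by (simp add: xx_def idx)
    qed
    then show "\<exists>no. \<forall>n\<ge>no. norm (\<phi> (x n) - 0) < e" by blast
  qed
qed

end



lemma geo_tail: "k \<le> m \<Longrightarrow> (\<Sum>n\<in>{k..<m}. (1/2::real)^n) = 2*(1/2)^k - 2*(1/2)^m"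
proof (induction m)
  case 0 then show ?case by simp
next
  case (Suc m)
  show ?case
  proof (cases "k = Suc m")
    case True then show ?thesis by simp
  next
    case False
    then have "k \<le> m" using Suc.prems by simp
    have "(\<Sum>n\<in>{k..<Suc m}. (1/2::real)^n) = (\<Sum>n\<in>{k..<m}. (1/2)^n) + (1/2)^m" using \<open>k \<le> m\<close> by simp
    then show ?thesis using Suc.IH[OF \<open>k \<le> m\<close>] by simp
  qed
qed

context bfs begin

lemma N_zero0: "N (\<lambda>x. 0) = 0" using N_zero[OF zero] by simp

lemma sumX: assumes "finite S" "\<And>i. i \<in> S \<Longrightarrow> v i \<in> X"
  shows "(\<lambda>x. \<Sum>i\<in>S. v i x) \<in> X"
  using assms
proof (induction S rule: finite_induct)
  case empty then show ?case using zero by simp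
next
  case (insert a F) then show ?case using add[of "v a" "\<lambda>x. \<Sum>i\<in>F. v i x"] by simp
qed

lemma N_sum: assumes "finite S" "\<And>i. i \<in> S \<Longrightarrow> v i \<in> X"
  shows "N (\<lambda>x. \<Sum>i\<in>S. v i x) \<le> (\<Sum>i\<in>S. N (v i))"
  using assms
proof (induction S rule: finite_induct)
  case empty then show ?case using N_zero0 by simp
next
  case (insert a F)
  have X1: "(\<lambda>x. \<Sum>i\<in>F. v i x) \<in> X" using sumX[OF insert.hyps(1), of v] insert.prems by auto
  have "N (\<lambda>x. \<Sum>i\<in>insert a F. v i x) = N (\<lambda>x. v a x + (\<Sum>i\<in>F. v i x))"
    using insert.hyps by simp
  also have "\<dots> \<le> N (v a) + N (\<lambda>x. \<Sum>i\<in>F. v i x)"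
    by (rule N_tri) (use insert.prems X1 in auto)
  also have "\<dots> \<le> N (v a) + (\<Sum>i\<in>F. N (v i))" using insert by simp
  finally show ?case using insert.hyps by simp
qed

lemma N_sym: "a \<in> X \<Longrightarrow> b \<in> X \<Longrightarrow> N (\<lambda>x. a x - b x) = N (\<lambda>x. b x - a x)"
  using N_smult[OF diff[of a b], of "-1"] by simp

lemma pos_bounded:
  assumes lf: "linear_functional_on M X \<phi>" and p: "pos \<phi>"
  shows "\<exists>K\<ge>0. \<forall>g\<in>X. \<bar>\<phi> g\<bar> \<le> K * N g"
proof (rule ccontr)
  assume "\<not> ?thesis"
  then have "\<forall>n::nat. \<exists>g. g \<in> X \<and> \<bar>\<phi> g\<bar> > 4^n * N g"
    by (metis not_le zero_le_numeral zero_le_power)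
  then obtain g where g: "\<And>n. g n \<in> X" "\<And>n. \<bar>\<phi> (g n)\<bar> > 4^n * N (g n)" by metis
  have Npos: "N (g n) > 0" for n
  proof -
    have "N (g n) \<noteq> 0"
    proof
      assume "N (g n) = 0"
      then have "AE x in M. g n x = 0" using N_zero[OF g(1)] by simp
      then have "\<phi> (g n) = 0" by (rule lf_null[OF lf g(1)])
      then show False using g(2)[of n] \<open>N (g n) = 0\<close> by simp
    qed
    then show ?thesis using N_nonneg[OF g(1)[of n]] by linarith
  qed
  define h where "h n = (\<lambda>x. inverse (N (g n)) * \<bar>g n x\<bar>)" for n
  have hX: "h n \<in> X" for n unfolding h_def by (rule smult[OF absX[OF g(1)]])
  have hnn: "0 \<le> h n x" for n x unfolding h_def using Npos[of n] by simp
  have ph: "\<phi> (h n) \<ge> 4^n" for n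
  proof -
    have "\<phi> (h n) = inverse (N (g n)) * \<phi> (\<lambda>x. \<bar>g n x\<bar>)"
      unfolding h_def by (rule lf_smult[OF lf absX[OF g(1)]])
    also have "\<dots> \<ge> inverse (N (g n)) * \<bar>\<phi> (g n)\<bar>"
      using pos_abs[OF lf p g(1)] Npos[of n] by (simp add: mult_left_mono)
    finally have "\<phi> (h n) \<ge> inverse (N (g n)) * \<bar>\<phi> (g n)\<bar>" .
    moreover have "inverse (N (g n)) * \<bar>\<phi> (g n)\<bar> \<ge> 4^n"
      using g(2)[of n] Npos[of n] by (simp add: field_simps)
    ultimately show ?thesis by linarith
  qed
  have Nh: "N (h n) = 1" for n
    unfolding h_def using N_smult[OF absX[OF g(1)], of "inverse (N (g n))"] N_abs[OF g(1)] Npos[of n]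
    by simp
  define u where "u m = (\<lambda>x. \<Sum>n<m. (1/2)^n * h n x)" for m
  have termX: "(\<lambda>x. (1/2)^n * h n x) \<in> X" for n by (rule smult[OF hX])
  have uX: "u m \<in> X" and pu: "\<phi> (u m) = (\<Sum>n<m. (1/2)^n * \<phi> (h n))" for m
    using lf_sum[OF lf finite_lessThan[of m], of "\<lambda>n x. (1/2)^n * h n x"] termX lf_smult[OF lf hX]
    unfolding u_def by auto
  have pu_ge: "\<phi> (u m) \<ge> real m" for m
  proof -
    have "(\<Sum>n<m. (1::real)) \<le> (\<Sum>n<m. (1/2)^n * \<phi> (h n))"
    proof (rule sum_mono)
      fix n assume "n \<in> {..<m}"
      have "(1/2::real)^n * 4^n = 2^n" by (simp add: power_mult_distrib[symmetric])
      moreover have "(1::real) \<le> 2^n" by simp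
      moreover have "(1/2::real)^n * 4^n \<le> (1/2)^n * \<phi> (h n)" using ph[of n] by (simp add: mult_left_mono)
      ultimately show "1 \<le> (1/2::real)^n * \<phi> (h n)" by linarith
    qed
    then show ?thesis using pu[of m] by simp
  qed
  have udiff: "N (\<lambda>x. u m x - u k x) \<le> 2*(1/2)^k" if "k \<le> m" for k m
  proof -
    have eq: "(\<lambda>x. u m x - u k x) = (\<lambda>x. \<Sum>n\<in>{k..<m}. (1/2)^n * h n x)"
    proof
      fix x
      have "{..<m} = {..<k} \<union> {k..<m}" using that by auto
      then have "(\<Sum>n<m. (1/2::real)^n * h n x) = (\<Sum>n\<in>{..<k} \<union> {k..<m}. (1/2)^n * h n x)"
        by simp
      also have "\<dots> = (\<Sum>n<k. (1/2)^n * h n x) + (\<Sum>n\<in>{k..<m}. (1/2)^n * h n x)"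
        by (rule sum.union_disjoint) auto
      finally have "(\<Sum>n<m. (1/2::real)^n * h n x) = (\<Sum>n<k. (1/2)^n * h n x) + (\<Sum>n\<in>{k..<m}. (1/2)^n * h n x)" .
      then show "u m x - u k x = (\<Sum>n\<in>{k..<m}. (1/2)^n * h n x)" unfolding u_def by simp
    qed
    have "N (\<lambda>x. \<Sum>n\<in>{k..<m}. (1/2)^n * h n x) \<le> (\<Sum>n\<in>{k..<m}. N (\<lambda>x. (1/2)^n * h n x))"
      by (rule N_sum) (use termX in auto)
    also have "\<dots> = (\<Sum>n\<in>{k..<m}. (1/2)^n)"
      using N_smult[OF hX] Nh by simp
    also have "\<dots> \<le> 2*(1/2)^k" using geo_tail[OF that] by simp
    finally show ?thesis using eq by simp
  qed
  have "\<exists>f\<in>X. (\<lambda>n. N (\<lambda>x. u n x - f x)) \<longlonglongrightarrow> 0"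
  proof (rule complete)
    show "\<forall>n. u n \<in> X" using uX by simp
    show "\<forall>e>0. \<exists>K. \<forall>m\<ge>K. \<forall>n\<ge>K. N (\<lambda>x. u m x - u n x) < e"
    proof (intro allI impI)
      fix e :: real assume "e > 0"
      then obtain K where K: "(1/2::real)^K < e/2" using real_arch_pow_inv[of "e/2" "1/2"] by auto
      have "\<forall>m\<ge>K. \<forall>n\<ge>K. N (\<lambda>x. u m x - u n x) < e"
      proof (intro allI impI)
        fix m n assume "K \<le> m" "K \<le> n"
        have K2: "2*(1/2::real)^j < e" if "K \<le> j" for j
        proof -
          have "(1/2::real)^j \<le> (1/2)^K" using that by (simp add: power_decreasing)
          then show ?thesis using K by linarith
        qed
        show "N (\<lambda>x. u m x - u n x) < e"
        proof (cases "n \<le> m")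
          case True then show ?thesis using udiff[OF True] K2[OF \<open>K \<le> n\<close>] by linarith
        next
          case False
          then have "N (\<lambda>x. u n x - u m x) \<le> 2*(1/2)^m" using udiff by simp
          then show ?thesis using K2[OF \<open>K \<le> m\<close>] N_sym[OF uX uX, of m n] by linarith
        qed
      qed
      then show "\<exists>K. \<forall>m\<ge>K. \<forall>n\<ge>K. N (\<lambda>x. u m x - u n x) < e" by blast
    qed
  qed
  then obtain f where fX: "f \<in> X" and lim: "(\<lambda>n. N (\<lambda>x. u n x - f x)) \<longlonglongrightarrow> 0" by blast
  have umono: "u k x \<le> u m x" if "k \<le> m" for k m x
    unfolding u_def using that hnn by (intro sum_mono2) auto
  have below: "AE x in M. u k x \<le> f x" for k
  proof -
    define w where "w = (\<lambda>x. max (u k x - f x) 0)"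
    have dX: "(\<lambda>x. u k x - f x) \<in> X" by (rule diff[OF uX fX])
    have wm: "w \<in> borel_measurable M" unfolding w_def using meas[OF uX] meas[OF fX] by measurable
    have wX: "w \<in> X" by (rule minX[OF dX wm]) (auto simp: w_def)
    have "N w \<le> N (\<lambda>x. u m x - f x)" if "k \<le> m" for m
    proof (rule N_mono[OF wX diff[OF uX fX]])
      have pt: "\<bar>w x\<bar> \<le> \<bar>u m x - f x\<bar>" for x
      proof -
        have "u k x \<le> u m x" by (rule umono[OF that])
        then show ?thesis unfolding w_def by arith
      qed
      show "AE x in M. \<bar>w x\<bar> \<le> \<bar>u m x - f x\<bar>" using pt by simp
    qed
    then have "N w \<le> 0" using LIMSEQ_le_const[OF lim, of "N w"] by blast
    then have "N w = 0" using N_nonneg[OF wX] by simp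
    then have "AE x in M. w x = 0" using N_zero[OF wX] by simp
    then show ?thesis by eventually_elim (auto simp: w_def)
  qed
  have "\<phi> (u k) \<le> \<phi> f" for k by (rule pos_mono[OF lf p uX fX below])
  then have "real k \<le> \<phi> f" for k using pu_ge[of k] by (meson order_trans)
  then show False using reals_Archimedean2[of "\<phi> f"] by (meson not_le)
qed

end



lemma suminf_abs_bound:
  fixes f b :: "nat \<Rightarrow> real"
  assumes "summable f" "summable b" "\<And>n. \<bar>f n\<bar> \<le> b n"
  shows "\<bar>suminf f\<bar> \<le> suminf b"
proof -
  have "suminf f \<le> suminf b" by (rule suminf_le) (use assms in \<open>auto simp: abs_le_iff\<close>)
  moreover have "suminf (\<lambda>n. - f n) \<le> suminf b"
    by (rule suminf_le) (use assms in \<open>auto simp: abs_le_iff summable_minus\<close>)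
  ultimately show ?thesis using suminf_minus[OF assms(1)] by linarith
qed

lemma geo_half_shift: "(\<Sum>n. (1/2::real)^(n+m) * Z) = 2 * (1/2)^m * Z"
proof -
  have "(\<lambda>n. (1/2::real)^(n+m) * Z) = (\<lambda>n. ((1/2)^m * Z) * (1/2)^n)"
    by (simp add: power_add algebra_simps)
  moreover have "(\<Sum>n. ((1/2::real)^m * Z) * (1/2)^n) = ((1/2)^m * Z) * 2"
    using suminf_mult[OF summable_geometric[of "1/2::real"], of "(1/2)^m * Z"]
      suminf_geometric[of "1/2::real"] by simp
  ultimately show ?thesis by simp
qed

context bfs begin

lemma countable_comb:
  fixes \<psi> :: "nat \<Rightarrow> ('a \<Rightarrow> real) \<Rightarrow> real"
  assumes psi: "\<And>n. \<psi> n \<in> order_cont_dual M X" "\<And>n. pos (\<psi> n)"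
  shows "\<exists>\<Phi> \<in> order_cont_dual M X. pos \<Phi> \<and>
     (\<forall>n. \<exists>c>0. \<forall>g\<in>X. (AE x in M. 0 \<le> g x) \<longrightarrow> c * \<psi> n g \<le> \<Phi> g) \<and>
     (\<forall>g\<in>X. (\<forall>n. \<psi> n g \<le> 0) \<longrightarrow> \<Phi> g \<le> 0)"
proof -
  have lf: "linear_functional_on M X (\<psi> n)" for n using psi(1) dual_lf by auto
  have "\<forall>n. \<exists>K\<ge>0. \<forall>g\<in>X. \<bar>\<psi> n g\<bar> \<le> K * N g" using pos_bounded[OF lf psi(2)] by blast
  then obtain K where K: "\<And>n. K n \<ge> 0" "\<And>n g. g \<in> X \<Longrightarrow> \<bar>\<psi> n g\<bar> \<le> K n * N g" by metis
  define c where "c n = (1/2::real)^n / (1 + K n)" for n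
  have cpos: "c n > 0" for n unfolding c_def using K(1)[of n] by simp
  have cK: "c n * K n \<le> (1/2)^n" for n
  proof -
    have "c n * K n = (1/2)^n * (K n / (1 + K n))" unfolding c_def by simp
    also have "\<dots> \<le> (1/2)^n * 1" using K(1)[of n] by (intro mult_left_mono) auto
    finally show ?thesis by simp
  qed
  have bnd: "\<bar>c n * \<psi> n g\<bar> \<le> (1/2)^n * N h" if "g \<in> X" "h \<in> X" "AE x in M. \<bar>g x\<bar> \<le> h x" for n g h
  proof -
    have "\<bar>\<psi> n g\<bar> \<le> \<psi> n (\<lambda>x. \<bar>g x\<bar>)" by (rule pos_abs[OF lf psi(2) that(1)])
    also have "\<dots> \<le> \<psi> n h" by (rule pos_mono[OF lf psi(2) absX[OF that(1)] that(2,3)])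
    also have "\<dots> \<le> K n * N h" using K(2)[OF that(2), of n] by simp
    finally have "\<bar>\<psi> n g\<bar> \<le> K n * N h" .
    then have "c n * \<bar>\<psi> n g\<bar> \<le> c n * (K n * N h)" using cpos[of n] by (simp add: mult_left_mono)
    also have "\<dots> = (c n * K n) * N h" by simp
    also have "\<dots> \<le> (1/2)^n * N h" using cK[of n] N_nonneg[OF that(2)] by (simp add: mult_right_mono)
    finally show ?thesis using cpos[of n] by (simp add: abs_mult)
  qed
  have bnd1: "\<bar>c n * \<psi> n g\<bar> \<le> (1/2)^n * N g" if "g \<in> X" for n g
    using bnd[OF that absX[OF that]] N_abs[OF that] by simp
  have sumgeo: "summable (\<lambda>n. (1/2::real)^n * Z)" for Z
    by (rule summable_mult2) (simp add: summable_geometric)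
  have summ: "summable (\<lambda>n. c n * \<psi> n g)" if "g \<in> X" for g
    by (rule summable_comparison_test'[OF sumgeo[of "N g"]]) (use bnd1[OF that] in simp)
  define \<Phi> where "\<Phi> g = (\<Sum>n. c n * \<psi> n g)" for g
  have linP: "linear_functional_on M X \<Phi>"
    unfolding linear_functional_on_def
  proof (intro conjI ballI allI impI)
    fix f g assume fg: "f \<in> X" "g \<in> X"
    have "\<Phi> (\<lambda>x. f x + g x) = (\<Sum>n. c n * \<psi> n f + c n * \<psi> n g)"
      unfolding \<Phi>_def using lf_add[OF lf fg] by (simp add: distrib_left)
    also have "\<dots> = \<Phi> f + \<Phi> g" unfolding \<Phi>_def by (rule suminf_add[symmetric]) (use summ fg in auto)
    finally show "\<Phi> (\<lambda>x. f x + g x) = \<Phi> f + \<Phi> g" .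
  next
    fix f d assume f: "f \<in> X"
    have "\<Phi> (\<lambda>x. d * f x) = (\<Sum>n. d * (c n * \<psi> n f))"
      unfolding \<Phi>_def using lf_smult[OF lf f] by (simp add: algebra_simps)
    also have "\<dots> = d * \<Phi> f" unfolding \<Phi>_def by (rule suminf_mult[OF summ[OF f]])
    finally show "\<Phi> (\<lambda>x. d * f x) = d * \<Phi> f" .
  next
    fix f g assume fg: "f \<in> X" "g \<in> X" "AE x in M. f x = g x"
    have "\<psi> n f = \<psi> n g" for n using lf_ae[OF lf fg] .
    then show "\<Phi> f = \<Phi> g" unfolding \<Phi>_def by simp
  qed
  have posP: "pos \<Phi>" unfolding pos_def
  proof (intro ballI impI)
    fix g assume g: "g \<in> X" "AE x in M. 0 \<le> g x"
    have "0 \<le> \<psi> n g" for n using psi(2)[of n] g unfolding pos_def by blast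
    then show "0 \<le> \<Phi> g" unfolding \<Phi>_def using cpos by (intro suminf_nonneg[OF summ[OF g(1)]]) (simp add: less_imp_le)
  qed
  have lower: "\<forall>n. \<exists>c>0. \<forall>g\<in>X. (AE x in M. 0 \<le> g x) \<longrightarrow> c * \<psi> n g \<le> \<Phi> g"
  proof
    fix n
    have "\<forall>g\<in>X. (AE x in M. 0 \<le> g x) \<longrightarrow> c n * \<psi> n g \<le> \<Phi> g"
    proof (intro ballI impI)
      fix g assume g: "g \<in> X" "AE x in M. 0 \<le> g x"
      have "0 \<le> \<psi> m g" for m using psi(2)[of m] g unfolding pos_def by blast
      then have "sum (\<lambda>m. c m * \<psi> m g) {n} \<le> \<Phi> g" unfolding \<Phi>_def
        using cpos by (intro sum_le_suminf[OF summ[OF g(1)]]) (auto simp: less_imp_le)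
      then show "c n * \<psi> n g \<le> \<Phi> g" by simp
    qed
    then show "\<exists>c>0. \<forall>g\<in>X. (AE x in M. 0 \<le> g x) \<longrightarrow> c * \<psi> n g \<le> \<Phi> g" using cpos by blast
  qed
  have nonpos: "\<forall>g\<in>X. (\<forall>n. \<psi> n g \<le> 0) \<longrightarrow> \<Phi> g \<le> 0"
  proof (intro ballI impI)
    fix g assume g: "g \<in> X" "\<forall>n. \<psi> n g \<le> 0"
    have "\<Phi> g \<le> (\<Sum>n::nat. 0)" unfolding \<Phi>_def
      by (rule suminf_le) (use g cpos summ[OF g(1)] in \<open>auto simp: mult_nonneg_nonpos less_imp_le\<close>)
    then show "\<Phi> g \<le> 0" by simp
  qed
  have ocP: "order_continuous M X \<Phi>"
  proof (rule oc_intro)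
    fix I :: "('a \<Rightarrow> real) set" and r x assume dir: "directed_set I r" and on: "order_null M X I r x"
    have xX: "\<And>a. a \<in> I \<Longrightarrow> x a \<in> X" using on unfolding order_null_def by blast
    obtain J :: "('a \<Rightarrow> real) set" and s z where dz: "decreasing_to_zero M X J s z"
      and ev: "\<forall>b\<in>J. net_eventually I r (\<lambda>a. ae_le M (\<lambda>\<omega>. \<bar>x a \<omega>\<bar>) (z b))"
      using on unfolding order_null_def by blast
    obtain b0 where b0: "b0 \<in> J" using dz unfolding decreasing_to_zero_def directed_set_def by blast
    have zX: "z b0 \<in> X" using dz b0 unfolding decreasing_to_zero_def by blast
    define Z where "Z = N (z b0)"
    have Z0: "Z \<ge> 0" unfolding Z_def by (rule N_nonneg[OF zX])
    have ev0: "net_eventually I r (\<lambda>a. ae_le M (\<lambda>\<omega>. \<bar>x a \<omega>\<bar>) (z b0))" using ev b0 by blast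
    show "net_tendsto I r (\<lambda>a. \<Phi> (x a)) 0" unfolding net_tendsto_def
    proof (intro allI impI)
      fix e :: real assume e: "e > 0"
      obtain m where m: "(1/2::real)^m < e / (4 * (Z + 1))"
        using real_arch_pow_inv[of "e / (4 * (Z + 1))" "1/2"] e Z0 by auto
      have tailb: "2 * (1/2::real)^m * Z < e / 2"
      proof -
        have "2 * (1/2::real)^m * Z \<le> 2 * (1/2)^m * (Z + 1)" using Z0 by simp
        also have "\<dots> < 2 * (e / (4 * (Z + 1))) * (Z + 1)" using m Z0
          by (intro mult_strict_right_mono mult_strict_left_mono) auto
        also have "\<dots> = e / 2" using Z0 by (simp add: field_simps)
        finally show ?thesis .
      qed
      have head: "net_tendsto I r (\<lambda>a. \<Sum>i<m. c i * \<psi> i (x a)) 0"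
        by (rule net_tendsto_sum[OF dir finite_lessThan])
           (rule net_tendsto_cmult[OF dir oc_D[OF dual_oc[OF psi(1)] dir on]])
      have evh: "net_eventually I r (\<lambda>a. \<bar>(\<Sum>i<m. c i * \<psi> i (x a)) - 0\<bar> < e/2)"
        using head e unfolding net_tendsto_def by (meson half_gt_zero)
      have "net_eventually I r (\<lambda>a. \<bar>(\<Sum>i<m. c i * \<psi> i (x a)) - 0\<bar> < e/2 \<and> ae_le M (\<lambda>\<omega>. \<bar>x a \<omega>\<bar>) (z b0))"
        by (rule net_ev_conj[OF dir evh ev0])
      then show "net_eventually I r (\<lambda>a. \<bar>\<Phi> (x a) - 0\<bar> < e)"
      proof (rule net_ev_mono)
        fix a assume a: "a \<in> I" and h: "\<bar>(\<Sum>i<m. c i * \<psi> i (x a)) - 0\<bar> < e/2 \<and> ae_le M (\<lambda>\<omega>. \<bar>x a \<omega>\<bar>) (z b0)"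
        have xa: "x a \<in> X" by (rule xX[OF a])
        have dom: "AE \<omega> in M. \<bar>x a \<omega>\<bar> \<le> z b0 \<omega>" using h unfolding ae_le_def by simp
        have sp: "\<Phi> (x a) = (\<Sum>n. c (n + m) * \<psi> (n + m) (x a)) + (\<Sum>i<m. c i * \<psi> i (x a))"
          unfolding \<Phi>_def by (rule suminf_split_initial_segment[OF summ[OF xa]])
        have "\<bar>\<Sum>n. c (n + m) * \<psi> (n + m) (x a)\<bar> \<le> (\<Sum>n. (1/2::real)^(n+m) * Z)"
        proof (rule suminf_abs_bound)
          show "summable (\<lambda>n. c (n + m) * \<psi> (n + m) (x a))"
            by (rule summable_ignore_initial_segment[OF summ[OF xa]])
          show "summable (\<lambda>n. (1/2::real)^(n+m) * Z)"
            using summable_ignore_initial_segment[OF sumgeo[of Z], of m] by simp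
          fix n show "\<bar>c (n + m) * \<psi> (n + m) (x a)\<bar> \<le> (1/2)^(n+m) * Z"
            unfolding Z_def by (rule bnd[OF xa zX dom])
        qed
        also have "\<dots> = 2 * (1/2)^m * Z" by (rule geo_half_shift)
        finally have "\<bar>\<Sum>n. c (n + m) * \<psi> (n + m) (x a)\<bar> < e/2" using tailb by linarith
        then show "\<bar>\<Phi> (x a) - 0\<bar> < e" using h sp by linarith
      qed
    qed
  qed
  have "\<Phi> \<in> order_cont_dual M X" using linP ocP unfolding order_cont_dual_def by blast
  then show ?thesis using posP lower nonpos by blast
qed

end



lemma quad:
  fixes a v :: "'i \<Rightarrow> real"
  assumes fin: "finite P"
    and h: "\<And>t. 0 < t \<Longrightarrow> t \<le> 1 \<Longrightarrow> (\<Sum>i\<in>P. (a i)^2) \<le> (\<Sum>i\<in>P. (a i - t * v i)^2)"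
  shows "(\<Sum>i\<in>P. a i * v i) \<le> 0"
proof (rule ccontr)
  define A where "A = (\<Sum>i\<in>P. a i * v i)"
  define V where "V = (\<Sum>i\<in>P. (v i)^2)"
  assume "\<not> ?thesis"
  then have Ap: "A > 0" unfolding A_def by simp
  have V0: "V \<ge> 0" unfolding V_def by (intro sum_nonneg) simp
  have exp: "(\<Sum>i\<in>P. (a i - t * v i)^2) = (\<Sum>i\<in>P. (a i)^2) - 2 * t * A + t^2 * V" for t
    unfolding A_def V_def
    by (simp add: power2_diff sum.distrib sum_subtractf sum_distrib_left power_mult_distrib algebra_simps)
  define t where "t = A / (A + V)"
  have t0: "0 < t" "t \<le> 1" unfolding t_def using Ap V0 by (auto simp: field_simps)
  have "2 * t * A \<le> t^2 * V" using h[OF t0] exp[of t] by linarith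
  then have "2 * A \<le> t * V" using t0 by (simp add: power2_eq_square algebra_simps)
  moreover have "t * V \<le> A"
  proof -
    have "t * V = A * (V / (A + V))" unfolding t_def by simp
    also have "\<dots> \<le> A * 1" using Ap V0 by (intro mult_left_mono) (auto simp: field_simps)
    finally show ?thesis by simp
  qed
  ultimately show False using Ap by linarith
qed

definition nbh :: "('a \<Rightarrow> real) set \<Rightarrow> (('a \<Rightarrow> real) \<Rightarrow> real) set \<Rightarrow> real \<Rightarrow> ('a \<Rightarrow> real) \<Rightarrow> ('a \<Rightarrow> real) set" where
  "nbh X P e f = {g\<in>X. \<forall>\<phi>\<in>P. \<bar>\<phi> g - \<phi> f\<bar> < e}"

lemma nbh_Un: "nbh X (P1 \<union> P2) (min e1 e2) f \<subseteq> nbh X P1 e1 f \<inter> nbh X P2 e2 f"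
  unfolding nbh_def by auto

lemma gen_nbhd_aux:
  assumes "generate_topology_on S U"
    and B: "\<And>s f. s \<in> S \<Longrightarrow> f \<in> s \<Longrightarrow> \<exists>P e. finite P \<and> P \<subseteq> D \<and> e > (0::real) \<and> nbh X P e f \<subseteq> s"
  shows "\<forall>f\<in>U. \<exists>P e. finite P \<and> P \<subseteq> D \<and> e > 0 \<and> nbh X P e f \<subseteq> U"
  using assms(1)
proof (induct rule: generate_topology_on.induct)
  case Empty then show ?case by simp
next
  case (Int a b)
  show ?case
  proof
    fix f assume f: "f \<in> a \<inter> b"
    then have fa: "f \<in> a" and fb: "f \<in> b" by auto
    obtain P1 e1 where 1: "finite P1" "P1 \<subseteq> D" "e1 > 0" "nbh X P1 e1 f \<subseteq> a"
      using Int(2) fa by meson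
    obtain P2 e2 where 2: "finite P2" "P2 \<subseteq> D" "e2 > 0" "nbh X P2 e2 f \<subseteq> b"
      using Int(4) fb by meson
    have "nbh X (P1 \<union> P2) (min e1 e2) f \<subseteq> a \<inter> b" using nbh_Un[of X P1 P2 e1 e2 f] 1(4) 2(4) by blast
    moreover have "finite (P1 \<union> P2)" "P1 \<union> P2 \<subseteq> D" "min e1 e2 > 0" using 1 2 by auto
    ultimately show "\<exists>P e. finite P \<and> P \<subseteq> D \<and> e > 0 \<and> nbh X P e f \<subseteq> a \<inter> b"
      by meson
  qed
next
  case (UN K)
  show ?case
  proof
    fix f assume "f \<in> \<Union>K"
    then obtain k where k: "k \<in> K" "f \<in> k" by blast
    then obtain P e where "finite P" "P \<subseteq> D" "e > 0" "nbh X P e f \<subseteq> k"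
      using UN(2) by meson
    moreover have "k \<subseteq> \<Union>K" using k by blast
    ultimately show "\<exists>P e. finite P \<and> P \<subseteq> D \<and> e > 0 \<and> nbh X P e f \<subseteq> \<Union>K"
      by (meson order_trans)
  qed
next
  case (Basis s)
  then show ?case using B by meson
qed

context bfs begin

lemma weak_topspace: "topspace (weak_topology M X) = X"
proof -
  let ?S = "{{f \<in> X. \<phi> f \<in> U} | \<phi> U. \<phi> \<in> order_cont_dual M X \<and> open U}"
  have "X \<in> ?S"
    using dual_zero by (intro CollectI exI[of _ "\<lambda>g. 0"] exI[of _ UNIV]) simp
  moreover have "\<And>s. s \<in> ?S \<Longrightarrow> s \<subseteq> X" by blast
  ultimately have "\<Union>?S = X" by blast
  then show ?thesis unfolding weak_topology_def topology_generated_by_topspace .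
qed

lemma weak_nbhd:
  assumes "openin (weak_topology M X) U" "f \<in> U"
  shows "\<exists>P e. finite P \<and> P \<subseteq> order_cont_dual M X \<and> e > 0 \<and> nbh X P e f \<subseteq> U"
proof -
  let ?S = "{{f \<in> X. \<phi> f \<in> U} | \<phi> U. \<phi> \<in> order_cont_dual M X \<and> open U}"
  have gen: "generate_topology_on ?S U"
    using assms(1) unfolding weak_topology_def by (rule openin_topology_generated_by)
  have B: "\<exists>P e. finite P \<and> P \<subseteq> order_cont_dual M X \<and> e > (0::real) \<and> nbh X P e f \<subseteq> s"
    if sS: "s \<in> ?S" and fs: "f \<in> s" for s f
  proof -
    obtain \<phi> V where s: "s = {f \<in> X. \<phi> f \<in> V}" "\<phi> \<in> order_cont_dual M X" "open V" using sS by blast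
    then have "\<phi> f \<in> V" using fs by blast
    then obtain e where e: "e > 0" "ball (\<phi> f) e \<subseteq> V" using s(3) open_contains_ball by blast
    have "nbh X {\<phi>} e f \<subseteq> s"
    proof
      fix g assume "g \<in> nbh X {\<phi>} e f"
      then have "g \<in> X" "dist (\<phi> f) (\<phi> g) < e" by (auto simp: nbh_def dist_real_def abs_minus_commute)
      then show "g \<in> s" using e(2) unfolding s(1) by auto
    qed
    moreover have "finite {\<phi>}" "{\<phi>} \<subseteq> order_cont_dual M X" using s(2) by auto
    ultimately show ?thesis using e(1) by meson
  qed
  show ?thesis using gen_nbhd_aux[OF gen B] assms(2) by blast
qed

end



lemma abs_le_sq1: "\<bar>x::real\<bar> \<le> x^2 + 1"
proof -
  have "0 \<le> (\<bar>x\<bar> - 1)^2" by simp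
  then have "0 \<le> x^2 - 2 * \<bar>x\<bar> + 1" by (simp add: power2_diff power2_abs)
  moreover have "0 \<le> x^2" by simp
  ultimately show ?thesis by linarith
qed

context bfs begin

lemma separate:
  assumes closed: "closedin (weak_topology M X) C"
    and cadd: "\<And>f g. f \<in> C \<Longrightarrow> g \<in> C \<Longrightarrow> (\<lambda>x. f x + g x) \<in> C"
    and cmul: "\<And>f c. f \<in> C \<Longrightarrow> c \<ge> 0 \<Longrightarrow> (\<lambda>x. c * f x) \<in> C"
    and c0: "(\<lambda>x. 0) \<in> C"
    and fX: "f \<in> X" and fC: "f \<notin> C"
  shows "\<exists>\<psi>\<in>order_cont_dual M X. (\<forall>c\<in>C. \<psi> c \<le> 0) \<and> \<psi> f > 0"
proof -
  have CX: "C \<subseteq> X" using closedin_subset[OF closed] weak_topspace by simp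
  have op: "openin (weak_topology M X) (X - C)" using closed weak_topspace unfolding closedin_def by simp
  have fXC: "f \<in> X - C" using fX fC by simp
  obtain P e where H: "finite P \<and> P \<subseteq> order_cont_dual M X \<and> e > 0 \<and> nbh X P e f \<subseteq> X - C"
    using weak_nbhd[OF op fXC] by (elim exE) (erule that)
  then have P: "finite P" "P \<subseteq> order_cont_dual M X" "e > 0" "nbh X P e f \<subseteq> X - C" by simp_all
  have lfP: "\<And>\<phi>. \<phi> \<in> P \<Longrightarrow> linear_functional_on M X \<phi>" using P(2) dual_lf by blast
  have far: "\<exists>\<phi>\<in>P. \<not> \<bar>\<phi> c - \<phi> f\<bar> < e" if cC: "c \<in> C" for c
  proof (rule ccontr)
    assume "\<not> (\<exists>\<phi>\<in>P. \<not> \<bar>\<phi> c - \<phi> f\<bar> < e)"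
    then have "\<forall>\<phi>\<in>P. \<bar>\<phi> c - \<phi> f\<bar> < e" by simp
    moreover have "c \<in> X" using cC CX by blast
    ultimately have "c \<in> nbh X P e f" unfolding nbh_def by simp
    then show False using P(4) cC by blast
  qed
  define T where "T g = (\<lambda>\<phi>. if \<phi> \<in> P then \<phi> g else 0)" for g :: "'a \<Rightarrow> real"
  define K where "K = T ` C"
  define b where "b = T f"
  define D where "D y = (\<Sum>\<phi>\<in>P. (b \<phi> - y \<phi>)^2)" for y :: "(('a\<Rightarrow>real)\<Rightarrow>real) \<Rightarrow> real"
  define CL where "CL = closure K"
  define Ob where "Ob = {y :: (('a\<Rightarrow>real)\<Rightarrow>real) \<Rightarrow> real. \<forall>\<phi>\<in>P. y \<phi> \<in> ball (b \<phi>) e}"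
  have openO: "open Ob" unfolding Ob_def
    using product_topology_basis'[where I=P and x="\<lambda>i. i" and U="\<lambda>\<phi>. ball (b \<phi>) e"] P(1) by simp
  have bO: "b \<in> Ob" unfolding Ob_def using P(3) by simp
  have OK: "Ob \<inter> K = {}"
  proof (rule ccontr)
    assume "Ob \<inter> K \<noteq> {}"
    then obtain c where c: "c \<in> C" "T c \<in> Ob" unfolding K_def by blast
    then have "\<forall>\<phi>\<in>P. \<bar>\<phi> c - \<phi> f\<bar> < e" unfolding Ob_def T_def b_def by (auto simp: dist_real_def abs_minus_commute)
    then show False using far[OF c(1)] by blast
  qed
  have bCL: "b \<notin> CL" using open_Int_closure_eq_empty[OF openO, of K] OK bO unfolding CL_def by blast
  define Z where "Z = {y :: (('a\<Rightarrow>real)\<Rightarrow>real) \<Rightarrow> real. \<forall>\<phi>. \<phi> \<notin> P \<longrightarrow> y \<phi> = 0}"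
  have closedZ: "closed Z" unfolding Z_def
  proof (rule closed_Collect_all)
    fix \<phi>
    show "closed {y :: (('a\<Rightarrow>real)\<Rightarrow>real) \<Rightarrow> real. \<phi> \<notin> P \<longrightarrow> y \<phi> = 0}"
    proof (cases "\<phi> \<in> P")
      case True then show ?thesis by simp
    next
      case False
      have "closed {y :: (('a\<Rightarrow>real)\<Rightarrow>real) \<Rightarrow> real. y \<phi> = (\<lambda>_. 0) y}"
        by (rule closed_Collect_eq) (auto intro: continuous_on_const)
      then show ?thesis using False by simp
    qed
  qed
  have KZ: "K \<subseteq> Z" unfolding K_def Z_def T_def by auto
  have CLZ: "CL \<subseteq> Z" unfolding CL_def by (rule closure_minimal[OF KZ closedZ])
  have KCL: "K \<subseteq> CL" unfolding CL_def by (rule closure_subset)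
  have Tlin: "T (\<lambda>x. c1 x + t * c2 x) = (\<lambda>\<phi>. T c1 \<phi> + t * T c2 \<phi>)" if "c1 \<in> X" "c2 \<in> X" for c1 c2 t
  proof
    fix \<phi>
    show "T (\<lambda>x. c1 x + t * c2 x) \<phi> = T c1 \<phi> + t * T c2 \<phi>"
    proof (cases "\<phi> \<in> P")
      case True
      then have "\<phi> (\<lambda>x. c1 x + t * c2 x) = \<phi> c1 + t * \<phi> c2"
        using lf_add[OF lfP[OF True] that(1) smult[OF that(2)]] lf_smult[OF lfP[OF True] that(2)] by simp
      then show ?thesis using True unfolding T_def by simp
    qed (simp add: T_def)
  qed
  have Tsc: "T (\<lambda>x. s * c x) = (\<lambda>\<phi>. s * T c \<phi>)" if "c \<in> X" for c s
  proof
    fix \<phi>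
    show "T (\<lambda>x. s * c x) \<phi> = s * T c \<phi>"
      unfolding T_def using lf_smult[OF lfP that] by simp
  qed
  have T0: "T (\<lambda>x. 0) = (\<lambda>\<phi>. 0)" unfolding T_def using lf_zero[OF lfP] by auto
  have zK: "(\<lambda>\<phi>. 0) \<in> K" unfolding K_def using T0 c0 by (metis image_eqI)
  have cl_add: "(\<lambda>\<phi>. y \<phi> + t * k \<phi>) \<in> CL" if yCL: "y \<in> CL" and kK: "k \<in> K" and t0: "t \<ge> 0" for y k t
  proof -
    let ?h = "\<lambda>(y :: (('a\<Rightarrow>real)\<Rightarrow>real) \<Rightarrow> real) \<phi>. y \<phi> + t * k \<phi>"
    have cont: "continuous_on (closure K) ?h"
      by (intro continuous_on_coordinatewise_then_product continuous_intros)
         (rule continuous_on_subset[OF continuous_on_product_coordinates], simp)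
    have "?h ` K \<subseteq> CL"
    proof
      fix w assume "w \<in> ?h ` K"
      then obtain c where c: "c \<in> C" "w = ?h (T c)" unfolding K_def by blast
      obtain c' where c': "c' \<in> C" "k = T c'" using kK unfolding K_def by blast
      have cX: "c \<in> X" "c' \<in> X" using c(1) c'(1) CX by auto
      have "w = T (\<lambda>x. c x + t * c' x)" using c(2) c'(2) Tlin[OF cX, of t] by simp
      moreover have "(\<lambda>x. c x + t * c' x) \<in> C" using cadd[OF c(1) cmul[OF c'(1) t0]] .
      ultimately show "w \<in> CL" using KCL unfolding K_def by blast
    qed
    then have "?h ` closure K \<subseteq> CL" by (intro image_closure_subset[OF cont]) (auto simp: CL_def)
    then show ?thesis using yCL unfolding CL_def by blast
  qed
  have cl_sc: "(\<lambda>\<phi>. s * y \<phi>) \<in> CL" if yCL: "y \<in> CL" and s0: "s \<ge> 0" for y s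
  proof -
    let ?h = "\<lambda>(y :: (('a\<Rightarrow>real)\<Rightarrow>real) \<Rightarrow> real) \<phi>. s * y \<phi>"
    have cont: "continuous_on (closure K) ?h"
      by (intro continuous_on_coordinatewise_then_product continuous_intros)
         (rule continuous_on_subset[OF continuous_on_product_coordinates], simp)
    have "?h ` K \<subseteq> CL"
    proof
      fix w assume "w \<in> ?h ` K"
      then obtain c where c: "c \<in> C" "w = ?h (T c)" unfolding K_def by blast
      have cX: "c \<in> X" using c(1) CX by auto
      have "w = T (\<lambda>x. s * c x)" using c(2) Tsc[OF cX, of s] by simp
      moreover have "(\<lambda>x. s * c x) \<in> C" using cmul[OF c(1) s0] .
      ultimately show "w \<in> CL" using KCL unfolding K_def by blast
    qed
    then have "?h ` closure K \<subseteq> CL" by (intro image_closure_subset[OF cont]) (auto simp: CL_def)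
    then show ?thesis using yCL unfolding CL_def by blast
  qed
  have Dnn: "D y \<ge> 0" for y unfolding D_def by (intro sum_nonneg) simp
  define R where "R = D (\<lambda>\<phi>. 0) + 1"
  have R1: "R \<ge> 1" unfolding R_def using Dnn by simp
  define Sb where "Sb \<phi> = (if \<phi> \<in> P then {b \<phi> - R .. b \<phi> + R} else {0::real})" for \<phi>
  define B where "B = PiE UNIV Sb"
  have Bmem: "y \<in> B \<longleftrightarrow> (\<forall>\<phi>. y \<phi> \<in> Sb \<phi>)" for y unfolding B_def PiE_UNIV_domain by auto
  have compB: "compact B"
  proof -
    have "compactin (product_topology (\<lambda>_. euclideanreal) UNIV) (PiE UNIV Sb)"
      unfolding compactin_PiE by (auto simp: Sb_def)
    then show ?thesis unfolding B_def euclidean_product_topology by simp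
  qed
  define S0 where "S0 = B \<inter> CL"
  have compS0: "compact S0" unfolding S0_def CL_def by (rule compact_Int_closed[OF compB closed_closure])
  have bbound: "\<bar>b \<phi>\<bar> \<le> R" if "\<phi> \<in> P" for \<phi>
  proof -
    have "(b \<phi> - 0)^2 \<le> D (\<lambda>\<phi>. 0)" unfolding D_def
      by (rule member_le_sum[OF that]) (use P(1) in auto)
    then show ?thesis using abs_le_sq1[of "b \<phi>"] unfolding R_def by simp
  qed
  have zB: "(\<lambda>\<phi>. 0) \<in> B" unfolding Bmem
  proof
    fix \<phi> show "(\<lambda>\<phi>. 0::real) \<phi> \<in> Sb \<phi>"
    proof (cases "\<phi> \<in> P")
      case True then show ?thesis using bbound[OF True] unfolding Sb_def by (auto simp: abs_le_iff)
    qed (simp add: Sb_def)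
  qed
  have zS0: "(\<lambda>\<phi>. 0) \<in> S0" unfolding S0_def using zK KCL zB by blast
  have contD: "continuous_on S0 D" unfolding D_def
    by (intro continuous_intros) (rule continuous_on_subset[OF continuous_on_product_coordinates], simp)
  obtain y0 where y0: "y0 \<in> S0" "\<And>y. y \<in> S0 \<Longrightarrow> D y0 \<le> D y"
    using continuous_attains_inf[OF compS0 _ contD] zS0 by blast
  have y0CL: "y0 \<in> CL" using y0(1) unfolding S0_def by blast
  have y0Z: "y0 \<in> Z" using y0CL CLZ by blast
  have minall: "D y0 \<le> D y" if "y \<in> CL" for y
  proof (cases "y \<in> B")
    case True then show ?thesis using y0(2) that unfolding S0_def by blast
  next
    case False
    then obtain \<phi> where ph: "y \<phi> \<notin> Sb \<phi>" using Bmem by blast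
    have yZ: "y \<in> Z" using that CLZ by blast
    have phP: "\<phi> \<in> P"
    proof (rule ccontr)
      assume "\<phi> \<notin> P"
      then show False using ph yZ unfolding Sb_def Z_def by auto
    qed
    then have "\<bar>b \<phi> - y \<phi>\<bar> > R" using ph unfolding Sb_def by auto
    then have "R^2 < \<bar>b \<phi> - y \<phi>\<bar>^2" using R1 by (intro power_strict_mono) auto
    then have "R^2 < (b \<phi> - y \<phi>)^2" by simp
    moreover have "(b \<phi> - y \<phi>)^2 \<le> D y" unfolding D_def
      by (rule member_le_sum[OF phP]) (use P(1) in auto)
    moreover have "R \<le> R^2" using R1 by (simp add: power2_eq_square)
    moreover have "D y0 \<le> D (\<lambda>\<phi>. 0)" using y0(2)[OF zS0] .
    ultimately show ?thesis unfolding R_def by linarith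
  qed
  define a where "a \<phi> = b \<phi> - y0 \<phi>" for \<phi>
  have Dy0: "D y0 = (\<Sum>\<phi>\<in>P. (a \<phi>)^2)" unfolding D_def a_def by simp
  have Dshift: "D (\<lambda>\<phi>. y0 \<phi> + t * v \<phi>) = (\<Sum>\<phi>\<in>P. (a \<phi> - t * v \<phi>)^2)" for t v
    unfolding D_def a_def by (simp add: algebra_simps)
  have k_neg: "(\<Sum>\<phi>\<in>P. a \<phi> * k \<phi>) \<le> 0" if "k \<in> K" for k
  proof (rule quad[OF P(1)])
    fix t :: real assume "0 < t" "t \<le> 1"
    then have "(\<lambda>\<phi>. y0 \<phi> + t * k \<phi>) \<in> CL" using cl_add[OF y0CL that] by simp
    then show "(\<Sum>\<phi>\<in>P. (a \<phi>)^2) \<le> (\<Sum>\<phi>\<in>P. (a \<phi> - t * k \<phi>)^2)"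
      using minall Dy0 Dshift by metis
  qed
  have y0_1: "(\<Sum>\<phi>\<in>P. a \<phi> * y0 \<phi>) \<le> 0"
  proof (rule quad[OF P(1)])
    fix t :: real assume t: "0 < t" "t \<le> 1"
    have "(\<lambda>\<phi>. (1 + t) * y0 \<phi>) \<in> CL" using cl_sc[OF y0CL] t by simp
    moreover have "(\<lambda>\<phi>. (1 + t) * y0 \<phi>) = (\<lambda>\<phi>. y0 \<phi> + t * y0 \<phi>)" by (simp add: algebra_simps)
    ultimately have "(\<lambda>\<phi>. y0 \<phi> + t * y0 \<phi>) \<in> CL" by simp
    then show "(\<Sum>\<phi>\<in>P. (a \<phi>)^2) \<le> (\<Sum>\<phi>\<in>P. (a \<phi> - t * y0 \<phi>)^2)"
      using minall Dy0 Dshift by metis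
  qed
  have y0_2: "(\<Sum>\<phi>\<in>P. a \<phi> * (- y0 \<phi>)) \<le> 0"
  proof (rule quad[OF P(1)])
    fix t :: real assume t: "0 < t" "t \<le> 1"
    have "(\<lambda>\<phi>. (1 - t) * y0 \<phi>) \<in> CL" using cl_sc[OF y0CL] t by simp
    moreover have "(\<lambda>\<phi>. (1 - t) * y0 \<phi>) = (\<lambda>\<phi>. y0 \<phi> + t * (- y0 \<phi>))" by (simp add: algebra_simps)
    ultimately have "(\<lambda>\<phi>. y0 \<phi> + t * (- y0 \<phi>)) \<in> CL" by simp
    then show "(\<Sum>\<phi>\<in>P. (a \<phi>)^2) \<le> (\<Sum>\<phi>\<in>P. (a \<phi> - t * (- y0 \<phi>))^2)"
      using minall Dy0 Dshift by metis
  qed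
  have ay0: "(\<Sum>\<phi>\<in>P. a \<phi> * y0 \<phi>) = 0"
    using y0_1 y0_2 by (simp add: sum_negf)
  have Dpos: "D y0 > 0"
  proof (rule ccontr)
    assume "\<not> D y0 > 0"
    then have "D y0 = 0" using Dnn[of y0] by simp
    then have "\<forall>\<phi>\<in>P. (b \<phi> - y0 \<phi>)^2 = 0" unfolding D_def
      using sum_nonneg_eq_0_iff[OF P(1), of "\<lambda>\<phi>. (b \<phi> - y0 \<phi>)^2"] by simp
    then have "\<forall>\<phi>\<in>P. b \<phi> = y0 \<phi>" by simp
    moreover have "\<forall>\<phi>. \<phi> \<notin> P \<longrightarrow> b \<phi> = y0 \<phi>" using y0Z unfolding Z_def b_def T_def by simp
    ultimately have "b = y0" by (metis ext)
    then show False using bCL y0CL by simp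
  qed
  have ab: "(\<Sum>\<phi>\<in>P. a \<phi> * b \<phi>) > 0"
  proof -
    have "(\<Sum>\<phi>\<in>P. a \<phi> * b \<phi>) = (\<Sum>\<phi>\<in>P. (a \<phi>)^2 + a \<phi> * y0 \<phi>)"
      by (rule sum.cong) (auto simp: a_def power2_eq_square algebra_simps)
    also have "\<dots> = D y0" using ay0 Dy0 by (simp add: sum.distrib)
    finally show ?thesis using Dpos by simp
  qed
  define \<psi> where "\<psi> g = (\<Sum>\<phi>\<in>P. a \<phi> * \<phi> g)" for g
  have psiD: "\<psi> \<in> order_cont_dual M X"
    unfolding \<psi>_def using dual_lincomb[OF P(1), of "\<lambda>\<phi>. \<phi>" a] P(2) by blast
  have "\<psi> c \<le> 0" if "c \<in> C" for c
  proof -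
    have "\<psi> c = (\<Sum>\<phi>\<in>P. a \<phi> * T c \<phi>)" unfolding \<psi>_def T_def by (rule sum.cong) auto
    also have "\<dots> \<le> 0" using k_neg[of "T c"] that unfolding K_def by blast
    finally show ?thesis .
  qed
  moreover have "\<psi> f > 0"
  proof -
    have "\<psi> f = (\<Sum>\<phi>\<in>P. a \<phi> * b \<phi>)" unfolding \<psi>_def b_def T_def by (rule sum.cong) auto
    then show ?thesis using ab by simp
  qed
  ultimately show ?thesis using psiD by blast
qed

end



context bfs begin

definition Ev :: "(('a \<Rightarrow> real) \<Rightarrow> real) \<Rightarrow> 'a set set" where
  "Ev \<psi> = {A \<in> sets M. \<forall>h\<in>X. (AE x in M. h x \<noteq> 0 \<longrightarrow> x \<in> A) \<longrightarrow> \<psi> h = 0}"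

lemma Ev_D: "A \<in> Ev \<psi> \<Longrightarrow> h \<in> X \<Longrightarrow> (AE x in M. h x \<noteq> 0 \<longrightarrow> x \<in> A) \<Longrightarrow> \<psi> h = 0"
  unfolding Ev_def by blast

lemma Ev_sets: "A \<in> Ev \<psi> \<Longrightarrow> A \<in> sets M"
  unfolding Ev_def by blast

lemma Ev_empty: assumes "linear_functional_on M X \<psi>" shows "{} \<in> Ev \<psi>"
  unfolding Ev_def
proof (intro CollectI conjI ballI impI)
  fix h assume "h \<in> X" "AE x in M. h x \<noteq> 0 \<longrightarrow> x \<in> {}"
  then show "\<psi> h = 0" using lf_null[OF assms] by auto
qed simp

lemma indic_mult_X: assumes "h \<in> X" "A \<in> sets M" shows "(\<lambda>x. indicator A x * h x) \<in> X"
proof -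
  have "(\<lambda>x. indicator A x * h x) \<in> borel_measurable M" using meas[OF assms(1)] assms(2) by measurable
  then show ?thesis by (rule solid[OF assms(1)]) (auto simp: indicator_def)
qed

lemma Ev_UN:
  fixes A :: "nat \<Rightarrow> 'a set"
  assumes lf: "linear_functional_on M X \<psi>" and oc: "order_continuous M X \<psi>"
    and A: "\<And>n. A n \<in> Ev \<psi>"
  shows "(\<Union>n. A n) \<in> Ev \<psi>"
proof -
  have As: "A n \<in> sets M" for n using A Ev_sets by blast
  define U where "U n = (\<Union>k<n. A k)" for n
  have Us: "U n \<in> sets M" for n unfolding U_def using As by auto
  have Umono: "U m \<subseteq> U n" if "m \<le> n" for m n unfolding U_def using that
    by (intro UN_mono) auto
  have "\<forall>h\<in>X. (AE x in M. h x \<noteq> 0 \<longrightarrow> x \<in> (\<Union>n. A n)) \<longrightarrow> \<psi> h = 0"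
  proof (intro ballI impI)
    fix h assume hX: "h \<in> X" and hsupp: "AE x in M. h x \<noteq> 0 \<longrightarrow> x \<in> (\<Union>n. A n)"
    define piece where "piece k = (\<lambda>x. indicator (A k - U k) x * h x)" for k
    define part where "part n = (\<lambda>x. indicator (U n) x * h x)" for n
    have pieceX: "piece k \<in> X" for k unfolding piece_def using indic_mult_X[OF hX] As Us by auto
    have piece0: "\<psi> (piece k) = 0" for k
      by (rule Ev_D[OF A pieceX]) (auto simp: piece_def indicator_def)
    have part_eq: "part n = (\<lambda>x. \<Sum>k<n. piece k x)" for n
    proof (induction n)
      case 0 then show ?case by (simp add: part_def U_def)
    next
      case (Suc n)
      have "U (Suc n) = U n \<union> (A n - U n)" "U n \<inter> (A n - U n) = {}" unfolding U_def
        by (auto simp: lessThan_Suc)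
      then have "indicator (U (Suc n)) x = (indicator (U n) x + indicator (A n - U n) x :: real)" for x :: 'a
        by (auto simp: indicator_def)
      then show ?case using Suc.IH unfolding part_def piece_def
        by (auto simp: fun_eq_iff distrib_right dest: fun_cong)
    qed
    have partX: "part n \<in> X" for n unfolding part_def using indic_mult_X[OF hX Us] .
    have part0: "\<psi> (part n) = 0" for n
      using lf_sum[OF lf finite_lessThan[of n], of piece] pieceX piece0 part_eq[of n] by simp
    define xn where "xn n = (\<lambda>x. h x - part n x)" for n
    define zn where "zn n = (\<lambda>x. \<bar>xn n x\<bar>)" for n
    have xnX: "xn n \<in> X" for n unfolding xn_def by (rule diff[OF hX partX])
    have znX: "zn n \<in> X" for n unfolding zn_def by (rule absX[OF xnX])
    have zn_val: "zn n x = (if x \<in> U n then 0 else \<bar>h x\<bar>)" for n x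
      unfolding zn_def xn_def part_def by (simp add: indicator_def)
    have lim: "(\<lambda>n. \<psi> (xn n)) \<longlonglongrightarrow> 0"
    proof (rule seq_oc[OF oc xnX znX])
      show "AE \<omega> in M. \<bar>xn n \<omega>\<bar> \<le> zn n \<omega>" for n by (simp add: zn_def)
      show "AE \<omega> in M. 0 \<le> zn n \<omega>" for n by (simp add: zn_def)
      show "AE \<omega> in M. \<forall>m n. m \<le> n \<longrightarrow> zn n \<omega> \<le> zn m \<omega>"
        using Umono by (auto simp: zn_val)
      show "AE \<omega> in M. \<exists>n. zn n \<omega> = 0"
        using hsupp
      proof eventually_elim
        case (elim \<omega>)
        show ?case
        proof (cases "h \<omega> = 0")
          case True then show ?thesis by (intro exI[of _ 0]) (simp add: zn_val)
        next
          case False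
          then obtain k where "\<omega> \<in> A k" using elim by auto
          then have "\<omega> \<in> U (Suc k)" unfolding U_def by auto
          then show ?thesis by (intro exI[of _ "Suc k"]) (simp add: zn_val)
        qed
      qed
    qed
    have "\<psi> (xn n) = \<psi> h" for n unfolding xn_def using lf_diff[OF lf hX partX] part0 by simp
    then have "(\<lambda>n. \<psi> h) \<longlonglongrightarrow> 0" using lim by simp
    then show "\<psi> h = 0" using LIMSEQ_const_iff by blast
  qed
  moreover have "(\<Union>n. A n) \<in> sets M" using As by auto
  ultimately show ?thesis unfolding Ev_def by blast
qed

lemma Ev_Un:
  assumes lf: "linear_functional_on M X \<psi>" and oc: "order_continuous M X \<psi>"
    and "A \<in> Ev \<psi>" "B \<in> Ev \<psi>"
  shows "A \<union> B \<in> Ev \<psi>"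
proof -
  define F where "F n = (if n = 0 then A else if n = 1 then B else {})" for n :: nat
  have "F n \<in> Ev \<psi>" for n unfolding F_def using assms Ev_empty[OF lf] by auto
  then have "(\<Union>n. F n) \<in> Ev \<psi>" by (rule Ev_UN[OF lf oc])
  moreover have "(\<Union>n. F n) = A \<union> B"
  proof
    show "(\<Union>n. F n) \<subseteq> A \<union> B" unfolding F_def by auto
    show "A \<union> B \<subseteq> (\<Union>n. F n)"
    proof
      fix x assume "x \<in> A \<union> B"
      then have "x \<in> F 0 \<or> x \<in> F 1" unfolding F_def by auto
      then show "x \<in> (\<Union>n. F n)" by blast
    qed
  qed
  ultimately show ?thesis by simp
qed

lemma Ev_dom:
  assumes lf1: "linear_functional_on M X \<psi>1" and p1: "pos \<psi>1"
    and lf2: "linear_functional_on M X \<psi>2" and p2: "pos \<psi>2"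
    and c: "c > 0" and dom: "\<And>g. g \<in> X \<Longrightarrow> (AE x in M. 0 \<le> g x) \<Longrightarrow> c * \<psi>2 g \<le> \<psi>1 g"
  shows "Ev \<psi>1 \<subseteq> Ev \<psi>2"
proof
  fix A assume A: "A \<in> Ev \<psi>1"
  have "\<forall>h\<in>X. (AE x in M. h x \<noteq> 0 \<longrightarrow> x \<in> A) \<longrightarrow> \<psi>2 h = 0"
  proof (intro ballI impI)
    fix h assume hX: "h \<in> X" and hs: "AE x in M. h x \<noteq> 0 \<longrightarrow> x \<in> A"
    have aX: "(\<lambda>x. \<bar>h x\<bar>) \<in> X" by (rule absX[OF hX])
    have "\<psi>1 (\<lambda>x. \<bar>h x\<bar>) = 0" by (rule Ev_D[OF A aX]) (use hs in auto)
    then have "c * \<psi>2 (\<lambda>x. \<bar>h x\<bar>) \<le> 0" using dom[OF aX] by simp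
    moreover have "0 \<le> \<psi>2 (\<lambda>x. \<bar>h x\<bar>)" using p2 aX unfolding pos_def by auto
    ultimately have "\<psi>2 (\<lambda>x. \<bar>h x\<bar>) = 0" using c by (simp add: mult_le_0_iff)
    then show "\<psi>2 h = 0" using pos_abs[OF lf2 p2 hX] by simp
  qed
  then show "A \<in> Ev \<psi>2" using Ev_sets[OF A] unfolding Ev_def by blast
qed

lemma Ev_support:
  assumes lf: "linear_functional_on M X \<psi>" and p: "pos \<psi>" and oc: "order_continuous M X \<psi>"
    and fX: "f \<in> X" and f0: "AE x in M. 0 \<le> f x" and pf: "\<psi> f = 0"
  shows "{x \<in> space M. 0 < f x} \<in> Ev \<psi>"
proof -
  have Ss: "{x \<in> space M. 0 < f x} \<in> sets M" using meas[OF fX] by measurable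
  have "\<forall>h\<in>X. (AE x in M. h x \<noteq> 0 \<longrightarrow> x \<in> {x \<in> space M. 0 < f x}) \<longrightarrow> \<psi> h = 0"
  proof (intro ballI impI)
    fix h assume hX: "h \<in> X" and hs: "AE x in M. h x \<noteq> 0 \<longrightarrow> x \<in> {x \<in> space M. 0 < f x}"
    define fp where "fp = (\<lambda>x. max (f x) 0)"
    have fpm: "fp \<in> borel_measurable M" unfolding fp_def using meas[OF fX] by measurable
    have fpX: "fp \<in> X" by (rule solid[OF fX fpm]) (auto simp: fp_def)
    have "AE x in M. f x = fp x" using f0 by eventually_elim (simp add: fp_def)
    then have pfp: "\<psi> fp = 0" using lf_ae[OF lf fX fpX] pf by simp
    have aX: "(\<lambda>x. \<bar>h x\<bar>) \<in> X" by (rule absX[OF hX])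
    define m where "m n = (\<lambda>x. min \<bar>h x\<bar> (real n * fp x))" for n :: nat
    have mm: "m n \<in> borel_measurable M" for n unfolding m_def using meas[OF hX] fpm by measurable
    have mX: "m n \<in> X" for n by (rule solid[OF hX mm]) (auto simp: m_def fp_def)
    have pm: "\<psi> (m n) = 0" for n
    proof -
      have "\<psi> (m n) \<le> \<psi> (\<lambda>x. real n * fp x)"
        by (rule pos_mono[OF lf p mX smult[OF fpX]]) (auto simp: m_def)
      also have "\<dots> = 0" using lf_smult[OF lf fpX] pfp by simp
      finally have "\<psi> (m n) \<le> 0" .
      moreover have "0 \<le> \<psi> (m n)" using p mX unfolding pos_def by (auto simp: m_def fp_def)
      ultimately show ?thesis by simp
    qed
    define xn where "xn n = (\<lambda>x. \<bar>h x\<bar> - m n x)" for n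
    have xnX: "xn n \<in> X" for n unfolding xn_def by (rule diff[OF aX mX])
    have xn_nn: "0 \<le> xn n x" for n x unfolding xn_def m_def by simp
    have lim: "(\<lambda>n. \<psi> (xn n)) \<longlonglongrightarrow> 0"
    proof (rule seq_oc[OF oc xnX xnX])
      show "AE \<omega> in M. \<bar>xn n \<omega>\<bar> \<le> xn n \<omega>" for n using xn_nn by simp
      show "AE \<omega> in M. 0 \<le> xn n \<omega>" for n using xn_nn by simp
      have "xn n \<omega> \<le> xn m \<omega>" if "m \<le> n" for m n \<omega>
      proof -
        have "real m * fp \<omega> \<le> real n * fp \<omega>" using that by (intro mult_right_mono) (auto simp: fp_def)
        then show ?thesis unfolding xn_def m_def by linarith
      qed
      then show "AE \<omega> in M. \<forall>m n. m \<le> n \<longrightarrow> xn n \<omega> \<le> xn m \<omega>" by simp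
      show "AE \<omega> in M. \<exists>n. xn n \<omega> = 0"
        using hs
      proof eventually_elim
        case (elim \<omega>)
        show ?case
        proof (cases "h \<omega> = 0")
          case True then show ?thesis by (intro exI[of _ 0]) (simp add: xn_def m_def)
        next
          case False
          then have "0 < fp \<omega>" using elim by (auto simp: fp_def)
          then obtain n where "\<bar>h \<omega>\<bar> < real n * fp \<omega>" using ex_less_of_nat_mult by blast
          then show ?thesis by (intro exI[of _ n]) (simp add: xn_def m_def)
        qed
      qed
    qed
    have "\<psi> (xn n) = \<psi> (\<lambda>x. \<bar>h x\<bar>)" for n unfolding xn_def using lf_diff[OF lf aX mX] pm by simp
    then have "(\<lambda>n. \<psi> (\<lambda>x. \<bar>h x\<bar>)) \<longlonglongrightarrow> 0" using lim by simp
    then have "\<psi> (\<lambda>x. \<bar>h x\<bar>) = 0" using LIMSEQ_const_iff by blast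
    then show "\<psi> h = 0" using pos_abs[OF lf p hX] by simp
  qed
  then show ?thesis using Ss unfolding Ev_def by blast
qed

end



theorem proposition3p5:
  fixes M :: "'a measure" and X :: "('a \<Rightarrow> real) set"
    and N :: "('a \<Rightarrow> real) \<Rightarrow> real" and C :: "('a \<Rightarrow> real) set"
  assumes "prob_space M"
    and "banach_function_space M X N"
    and "closedin (weak_topology M X) C"
    and "\<And>f g. f \<in> C \<Longrightarrow> g \<in> C \<Longrightarrow> (\<lambda>x. f x + g x) \<in> C"
    and "\<And>f c. f \<in> C \<Longrightarrow> c \<ge> 0 \<Longrightarrow> (\<lambda>x. c * f x) \<in> C"
    and "{f \<in> X. ae_le M f (\<lambda>x. 0)} \<subseteq> C"
    and "\<forall>f\<in>C. ae_le M (\<lambda>x. 0) f \<longrightarrow> (AE x in M. f x = 0)"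
  shows "\<exists>\<phi>\<in>order_cont_dual M X. strictly_positive M X \<phi> \<and> (\<forall>f\<in>C. \<phi> f \<le> 0)"
proof -
  interpret bfs M X N by (rule bfs.intro) (rule assms(2))
  interpret P: prob_space M by (rule assms(1))
  have CX: "C \<subseteq> X" using closedin_subset[OF assms(3)] weak_topspace by simp
  have c0: "(\<lambda>x. 0) \<in> C" using assms(6) zero by (auto simp: ae_le_def)
  define F where "F = {\<psi> \<in> order_cont_dual M X. pos \<psi> \<and> (\<forall>c\<in>C. \<psi> c \<le> 0)}"
  have Fpos: "pos \<psi>" if psiD: "\<psi> \<in> order_cont_dual M X" and psiC: "\<forall>c\<in>C. \<psi> c \<le> 0" for \<psi>
    unfolding pos_def
  proof (intro ballI impI)
    fix g assume gX: "g \<in> X" and g0: "AE x in M. 0 \<le> g x"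
    have ngX: "(\<lambda>x. -1 * g x) \<in> X" by (rule smult[OF gX])
    have "ae_le M (\<lambda>x. -1 * g x) (\<lambda>x. 0)" unfolding ae_le_def using g0 by simp
    then have "(\<lambda>x. -1 * g x) \<in> C" using assms(6) ngX by blast
    then have "\<psi> (\<lambda>x. -1 * g x) \<le> 0" using psiC by blast
    then show "0 \<le> \<psi> g" using lf_smult[OF dual_lf[OF psiD] gX, of "-1"] by simp
  qed
  have FD: "\<psi> \<in> order_cont_dual M X" "pos \<psi>" "\<forall>c\<in>C. \<psi> c \<le> 0" "linear_functional_on M X \<psi>"
    "order_continuous M X \<psi>" if "\<psi> \<in> F" for \<psi>
    using that dual_lf dual_oc unfolding F_def by auto
  have stepA: "\<exists>\<psi>\<in>F. \<psi> f > 0" if fX: "f \<in> X" and f0: "AE x in M. 0 \<le> f x"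
    and fn0: "\<not> (AE x in M. f x = 0)" for f
  proof -
    have "f \<notin> C"
    proof
      assume "f \<in> C"
      then have "AE x in M. f x = 0" using assms(7) f0 unfolding ae_le_def by blast
      then show False using fn0 by simp
    qed
    then obtain \<psi> where psi: "\<psi> \<in> order_cont_dual M X" "\<forall>c\<in>C. \<psi> c \<le> 0" "\<psi> f > 0"
      using separate[OF assms(3) assms(4) assms(5) c0 fX] by blast
    then have "\<psi> \<in> F" unfolding F_def using Fpos by blast
    then show ?thesis using psi(3) by blast
  qed
  define d where "d \<psi> = Sup (measure M ` Ev \<psi>)" for \<psi>
  have Ev_ne: "measure M ` Ev \<psi> \<noteq> {}" if "\<psi> \<in> F" for \<psi> using Ev_empty[OF FD(4)[OF that]] by blast
  have bdd: "bdd_above (measure M ` Ev \<psi>)" for \<psi>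
    by (rule bdd_aboveI[of _ 1]) auto
  have d_upper: "measure M A \<le> d \<psi>" if "A \<in> Ev \<psi>" for A \<psi>
    unfolding d_def by (rule cSup_upper) (use that bdd in auto)
  have d_nn: "0 \<le> d \<psi>" if "\<psi> \<in> F" for \<psi>
    using d_upper[OF Ev_empty[OF FD(4)[OF that]]] by simp
  have d_att: "\<exists>A\<in>Ev \<psi>. measure M A = d \<psi>" if psiF: "\<psi> \<in> F" for \<psi>
  proof -
    have "\<forall>n. \<exists>A\<in>Ev \<psi>. d \<psi> - inverse (real (Suc n)) < measure M A"
    proof
      fix n
      have "d \<psi> - inverse (real (Suc n)) < d \<psi>" by simp
      then show "\<exists>A\<in>Ev \<psi>. d \<psi> - inverse (real (Suc n)) < measure M A"
        unfolding d_def using less_cSup_iff[OF Ev_ne[OF psiF] bdd] by blast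
    qed
    then obtain A where A: "\<And>n. A n \<in> Ev \<psi>" "\<And>n. d \<psi> - inverse (real (Suc n)) < measure M (A n)"
      by metis
    have UA: "(\<Union>n. A n) \<in> Ev \<psi>" by (rule Ev_UN[OF FD(4,5)[OF psiF] A(1)])
    have UAs: "(\<Union>n. A n) \<in> sets M" by (rule Ev_sets[OF UA])
    have le: "measure M (A n) \<le> measure M (\<Union>n. A n)" for n
      by (rule P.finite_measure_mono[OF _ UAs]) auto
    have up: "measure M (\<Union>n. A n) \<le> d \<psi>" by (rule d_upper[OF UA])
    have "measure M (\<Union>n. A n) = d \<psi>"
    proof (rule ccontr)
      assume "measure M (\<Union>n. A n) \<noteq> d \<psi>"
      then have "0 < d \<psi> - measure M (\<Union>n. A n)" using up by simp
      then obtain m where m: "m > 0" "inverse (real m) < d \<psi> - measure M (\<Union>n. A n)"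
        using ex_inverse_of_nat_less by blast
      then obtain n where "m = Suc n" by (cases m) auto
      then show False using A(2)[of n] le[of n] m(2) by simp
    qed
    then show ?thesis using UA by blast
  qed
  have zF: "(\<lambda>g. 0) \<in> F" unfolding F_def pos_def using dual_zero by simp
  have FD': "d ` F \<noteq> {}" using zF by blast
  have bddF: "bdd_below (d ` F)" by (rule bdd_belowI[of _ 0]) (auto intro: d_nn)
  define \<delta> where "\<delta> = Inf (d ` F)"
  have d_low: "\<delta> \<le> d \<psi>" if "\<psi> \<in> F" for \<psi>
    unfolding \<delta>_def by (rule cInf_lower) (use that bddF in auto)
  have "\<forall>n. \<exists>\<psi>\<in>F. d \<psi> < \<delta> + inverse (real (Suc n))"
  proof
    fix n
    have "\<delta> < \<delta> + inverse (real (Suc n))" by simp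
    then show "\<exists>\<psi>\<in>F. d \<psi> < \<delta> + inverse (real (Suc n))"
      unfolding \<delta>_def using cInf_less_iff[OF FD' bddF] by blast
  qed
  then obtain \<psi>s where psis: "\<And>n. \<psi>s n \<in> F" "\<And>n. d (\<psi>s n) < \<delta> + inverse (real (Suc n))"
    by metis
  obtain \<Phi> where Phi: "\<Phi> \<in> order_cont_dual M X" "pos \<Phi>"
    "\<forall>n. \<exists>c>0. \<forall>g\<in>X. (AE x in M. 0 \<le> g x) \<longrightarrow> c * \<psi>s n g \<le> \<Phi> g"
    "\<forall>g\<in>X. (\<forall>n. \<psi>s n g \<le> 0) \<longrightarrow> \<Phi> g \<le> 0"
    using countable_comb[of \<psi>s] FD(1,2)[OF psis(1)] by blast
  have PhiC: "\<forall>c\<in>C. \<Phi> c \<le> 0" using Phi(4) CX FD(3)[OF psis(1)] by blast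
  have PhiF: "\<Phi> \<in> F" unfolding F_def using Phi(1,2) PhiC by blast
  have dPhi_n: "d \<Phi> \<le> d (\<psi>s n)" for n
  proof -
    obtain c where c: "c > 0" "\<forall>g\<in>X. (AE x in M. 0 \<le> g x) \<longrightarrow> c * \<psi>s n g \<le> \<Phi> g" using Phi(3) by blast
    have "Ev \<Phi> \<subseteq> Ev (\<psi>s n)"
      by (rule Ev_dom[OF FD(4)[OF PhiF] Phi(2) FD(4)[OF psis(1)] FD(2)[OF psis(1)] c(1)]) (use c(2) in blast)
    then show ?thesis unfolding d_def
      by (intro cSup_subset_mono[OF Ev_ne[OF PhiF] bdd]) auto
  qed
  have dPhi: "d \<Phi> \<le> \<delta>"
  proof (rule ccontr)
    assume "\<not> d \<Phi> \<le> \<delta>"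
    then have "0 < d \<Phi> - \<delta>" by simp
    then obtain m where m: "m > 0" "inverse (real m) < d \<Phi> - \<delta>"
      using ex_inverse_of_nat_less by blast
    then obtain n where "m = Suc n" by (cases m) auto
    then show False using psis(2)[of n] dPhi_n[of n] m(2) by simp
  qed
  have sp: "strictly_positive M X \<Phi>"
    unfolding strictly_positive_def
  proof (intro ballI impI)
    fix f assume fX: "f \<in> X" and fh: "ae_le M (\<lambda>x. 0) f \<and> \<not> (AE x in M. f x = 0)"
    have f0: "AE x in M. 0 \<le> f x" using fh unfolding ae_le_def by simp
    show "\<Phi> f > 0"
    proof (rule ccontr)
      assume "\<not> \<Phi> f > 0"
      moreover have "0 \<le> \<Phi> f" using Phi(2) fX f0 unfolding pos_def by blast
      ultimately have Pf: "\<Phi> f = 0" by simp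
      define Sf where "Sf = {x \<in> space M. 0 < f x}"
      have SfE: "Sf \<in> Ev \<Phi>" unfolding Sf_def
        by (rule Ev_support[OF FD(4)[OF PhiF] Phi(2) FD(5)[OF PhiF] fX f0 Pf])
      obtain \<psi>' where psi': "\<psi>' \<in> F" "\<psi>' f > 0" using stepA[OF fX f0] fh by blast
      define \<psi>2 where "\<psi>2 = (\<lambda>g. \<Phi> g + \<psi>' g)"
      have p2D: "\<psi>2 \<in> order_cont_dual M X" unfolding \<psi>2_def by (rule dual_add[OF Phi(1) FD(1)[OF psi'(1)]])
      have p2pos: "pos \<psi>2" using Phi(2) FD(2)[OF psi'(1)] unfolding pos_def \<psi>2_def by auto
      have p2C: "\<forall>c\<in>C. \<psi>2 c \<le> 0" using PhiC FD(3)[OF psi'(1)] unfolding \<psi>2_def by (simp add: add_nonpos_nonpos)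
      have p2F: "\<psi>2 \<in> F" unfolding F_def using p2D p2pos p2C by blast
      obtain B where B: "B \<in> Ev \<psi>2" "measure M B = d \<psi>2" using d_att[OF p2F] by blast
      have Bs: "B \<in> sets M" by (rule Ev_sets[OF B(1)])
      have Sfs: "Sf \<in> sets M" by (rule Ev_sets[OF SfE])
      have BPhi: "B \<in> Ev \<Phi>"
      proof -
        have "Ev \<psi>2 \<subseteq> Ev \<Phi>"
        proof (rule Ev_dom[OF FD(4)[OF p2F] p2pos FD(4)[OF PhiF] Phi(2), of 1])
          fix g assume "g \<in> X" "AE x in M. 0 \<le> g x"
          then have "0 \<le> \<psi>' g" using FD(2)[OF psi'(1)] unfolding pos_def by blast
          then show "1 * \<Phi> g \<le> \<psi>2 g" unfolding \<psi>2_def by simp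
        qed simp
        then show ?thesis using B(1) by blast
      qed
      have Bpsi': "B \<in> Ev \<psi>'"
      proof -
        have "Ev \<psi>2 \<subseteq> Ev \<psi>'"
        proof (rule Ev_dom[OF FD(4)[OF p2F] p2pos FD(4)[OF psi'(1)] FD(2)[OF psi'(1)], of 1])
          fix g assume "g \<in> X" "AE x in M. 0 \<le> g x"
          then have "0 \<le> \<Phi> g" using Phi(2) unfolding pos_def by blast
          then show "1 * \<psi>' g \<le> \<psi>2 g" unfolding \<psi>2_def by simp
        qed simp
        then show ?thesis using B(1) by blast
      qed
      have "B \<union> Sf \<in> Ev \<Phi>" by (rule Ev_Un[OF FD(4,5)[OF PhiF] BPhi SfE])
      then have "measure M (B \<union> Sf) \<le> d \<Phi>" by (rule d_upper)
      also have "\<dots> \<le> \<delta>" by (rule dPhi)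
      also have "\<dots> \<le> d \<psi>2" by (rule d_low[OF p2F])
      also have "\<dots> = measure M B" using B(2) by simp
      finally have "measure M (B \<union> Sf) \<le> measure M B" .
      moreover have "measure M (B \<union> Sf) = measure M B + measure M (Sf - B)"
        by (rule P.finite_measure_Union'[OF Bs Sfs])
      moreover have "0 \<le> measure M (Sf - B)" by simp
      ultimately have "measure M (Sf - B) = 0" by linarith
      then have "emeasure M (Sf - B) = 0" using P.emeasure_eq_measure by simp
      then have "Sf - B \<in> null_sets M" using Bs Sfs by auto
      then have nb: "AE x in M. x \<notin> Sf - B" by (rule AE_not_in)
      have "AE x in M. f x \<noteq> 0 \<longrightarrow> x \<in> B"
        using nb f0 AE_space
      proof eventually_elim
        case (elim x)
        then show ?case unfolding Sf_def by auto
      qed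
      then have "\<psi>' f = 0" by (rule Ev_D[OF Bpsi' fX])
      then show False using psi'(2) by simp
    qed
  qed
  show ?thesis using Phi(1) sp PhiC by blast
qed


end
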